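(* Let $f:\mathbb{R}^d\to\mathbb{R}$ be differentiable and $L$-Lipschitz, $c\in\mathbb{R}^d$, $r>0$, $\eta\in(0,1)$, $g=\gamma_r*f$. Sample $x\sim\mathcal N(c,r^2I_d)$ and define the random vector field \[ \ell(y)=\frac{\gamma_r(y-x)}{\gamma_r(c-x)}\,\nabla f(x)\,\chi\big((x-c)^\top(y-c)\big)\,1_{\|x-c\|\le(\sqrt d+1/\eta)r}. \] Then for every $y$ with $\|y-c\|\le\frac{\eta}{4}r$: $\|\mathbb E\,\ell(y)-\nabla g(y)\|\le 2L\exp(-\frac{1}{2\eta^2})$, $\|\ell(y)\|\le 3L$, and $\|D\ell(y)\|_{op}\le\frac{20L\sqrt d}{r\eta}$ (wherever $\ell$ is differentiable in $y$).
   Context: $\gamma_r(x)=(\sqrt{2\pi}r)^{-d}\exp(-\|x\|^2/(2r^2))$; $g(x)=\int\gamma_r(y)f(x-y)dy$. $\chi(t)=0$ if $|t|\ge r^2$, $\chi(t)=1$ if $|t|\le r^2/2$, and $\chi(t)=2-2|t|/r^2$ otherwise. $D\ell$ is the Jacobian of $\ell$ with respect to $y$ and $\|\cdot\|_{op}$ the operator norm. *)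

theory Defs
  imports "HOL-Analysis.Analysis" "HOL-Probability.Probability"
begin

definition gauss_kernel :: "real \<Rightarrow> 'a::euclidean_space \<Rightarrow> real" where
  "gauss_kernel r x = (sqrt (2 * pi) * r) powr (- real DIM('a)) * exp (- (norm x)\<^sup>2 / (2 * r\<^sup>2))"

definition gauss_smooth :: "real \<Rightarrow> ('a::euclidean_space \<Rightarrow> real) \<Rightarrow> 'a \<Rightarrow> real" where
  "gauss_smooth r f x = (\<integral>y. gauss_kernel r y * f (x - y) \<partial>lborel)"

definition gradient :: "('a::euclidean_space \<Rightarrow> real) \<Rightarrow> 'a \<Rightarrow> 'a" where
  "gradient F x = (SOME v. (F has_derivative (\<lambda>h. v \<bullet> h)) (at x))"

definition chi :: "real \<Rightarrow> real \<Rightarrow> real" where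
  "chi r t = (if \<bar>t\<bar> \<ge> r\<^sup>2 then 0 else if \<bar>t\<bar> \<le> r\<^sup>2 / 2 then 1 else 2 - 2 * \<bar>t\<bar> / r\<^sup>2)"

definition gauss_measure :: "'a::euclidean_space \<Rightarrow> real \<Rightarrow> 'a measure" where
  "gauss_measure c r = density lborel (\<lambda>x. ennreal (gauss_kernel r (x - c)))"

definition ell :: "('a::euclidean_space \<Rightarrow> real) \<Rightarrow> 'a \<Rightarrow> real \<Rightarrow> real \<Rightarrow> 'a \<Rightarrow> 'a \<Rightarrow> 'a" where
  "ell f c r \<eta> x y =
     (gauss_kernel r (y - x) / gauss_kernel r (c - x) * chi r ((x - c) \<bullet> (y - c))
      * (if norm (x - c) \<le> (sqrt (real DIM('a)) + 1 / \<eta>) * r then 1 else 0)) *\<^sub>R gradient f x"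

end

theory Submission
  imports Defs
begin

lemma gk_prod:
  assumes "r > 0"
  shows "gauss_kernel r (x::'a::euclidean_space) = (\<Prod>b\<in>Basis. normal_density 0 r (x \<bullet> b))"
proof -
  have n: "(norm x)\<^sup>2 = (\<Sum>b\<in>Basis. (x \<bullet> b)\<^sup>2)"
    unfolding power2_norm_eq_inner by (subst euclidean_inner) (simp add: power2_eq_square)
  have s: "sqrt (2 * pi * r\<^sup>2) = sqrt (2*pi) * r" using assms
    by (simp add: real_sqrt_mult)
  have "(\<Prod>b\<in>Basis. normal_density 0 r (x \<bullet> b)) =
        (\<Prod>b\<in>Basis. (1 / (sqrt (2*pi) * r)) * exp (- (x \<bullet> b)\<^sup>2 / (2 * r\<^sup>2)))"
    by (simp add: normal_density_def s)
  also have "\<dots> = (1 / (sqrt (2*pi) * r)) ^ DIM('a) * exp (\<Sum>b\<in>Basis. - (x \<bullet> b)\<^sup>2 / (2 * r\<^sup>2))"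
    by (subst prod.distrib) (simp add: exp_sum)
  also have "(\<Sum>b\<in>Basis. - (x \<bullet> b)\<^sup>2 / (2 * r\<^sup>2)) = - (norm x)\<^sup>2 / (2 * r\<^sup>2)"
    by (simp add: n sum_divide_distrib sum_negf)
  also have "(1 / (sqrt (2*pi) * r)) ^ DIM('a) = (sqrt (2 * pi) * r) powr (- real DIM('a))"
    using assms by (simp add: powr_minus powr_realpow divide_inverse power_inverse power_mult_distrib)
  finally show ?thesis by (simp add: gauss_kernel_def)
qed

lemma nd_nn_integral:
  assumes "\<sigma> > 0"
  shows "(\<integral>\<^sup>+t. ennreal (normal_density \<mu> \<sigma> t) \<partial>lborel) = 1"
  using assms by (subst nn_integral_eq_integral) (auto intro: integrable_normal_density integral_normal_density)

lemma gk_nonneg: "r > 0 \<Longrightarrow> 0 \<le> gauss_kernel r x"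
  by (simp add: gauss_kernel_def)

lemma gk_pos: "r > 0 \<Longrightarrow> 0 < gauss_kernel r x"
  by (simp add: gauss_kernel_def)

lemma gk_cont: "continuous_on UNIV (gauss_kernel r)"
  unfolding gauss_kernel_def[abs_def] by (cases "r = 0") (auto intro!: continuous_intros)

lemma gk_meas[measurable]: "gauss_kernel r \<in> borel_measurable borel"
  using gk_cont by (rule borel_measurable_continuous_onI)

lemma gk_minus: "gauss_kernel r (-x) = gauss_kernel r x"
  by (simp add: gauss_kernel_def)

lemma gk_nn_integral:
  assumes "r > 0"
  shows "(\<integral>\<^sup>+x. ennreal (gauss_kernel r (x::'a::euclidean_space)) \<partial>lborel) = 1"
proof -
  have "(\<integral>\<^sup>+x. ennreal (gauss_kernel r (x::'a)) \<partial>lborel)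
      = (\<integral>\<^sup>+x. (\<Prod>b\<in>Basis. ennreal (normal_density 0 r ((x::'a) \<bullet> b))) \<partial>lborel)"
    using assms by (simp add: gk_prod prod_ennreal)
  also have "\<dots> = (\<Prod>b\<in>(Basis::'a set). (\<integral>\<^sup>+t. ennreal (normal_density 0 r t) \<partial>lborel))"
    by (rule nn_integral_lborel_prod) auto
  also have "\<dots> = 1" using assms by (simp add: nd_nn_integral)
  finally show ?thesis .
qed

lemma nd_exp_lin:
  assumes "r > 0"
  shows "normal_density 0 r t * exp (a * t) = exp (a\<^sup>2 * r\<^sup>2 / 2) * normal_density (a * r\<^sup>2) r t"
proof -
  have "- t\<^sup>2 / (2 * r\<^sup>2) + a * t = a\<^sup>2 * r\<^sup>2 / 2 + (- (t - a * r\<^sup>2)\<^sup>2 / (2 * r\<^sup>2))"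
    using assms by (simp add: field_simps power2_eq_square)
  then have "exp (- t\<^sup>2 / (2 * r\<^sup>2)) * exp (a * t) = exp (a\<^sup>2 * r\<^sup>2 / 2) * exp (- (t - a * r\<^sup>2)\<^sup>2 / (2 * r\<^sup>2))"
    by (metis exp_add)
  then show ?thesis unfolding normal_density_def
    by (simp add: mult_ac)
qed

lemma gk_mgf_lin:
  assumes "r > 0"
  shows "(\<integral>\<^sup>+x. ennreal (gauss_kernel r (x::'a::euclidean_space) * exp (w \<bullet> x)) \<partial>lborel)
     = ennreal (exp (r\<^sup>2 * (norm w)\<^sup>2 / 2))"
proof -
  have e: "exp (w \<bullet> x) = (\<Prod>b\<in>Basis. exp ((w \<bullet> b) * (x \<bullet> b)))" for x
    by (subst euclidean_inner) (simp add: exp_sum)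
  have "(\<integral>\<^sup>+x. ennreal (gauss_kernel r (x::'a) * exp (w \<bullet> x)) \<partial>lborel)
      = (\<integral>\<^sup>+x. (\<Prod>b\<in>Basis. ennreal (normal_density 0 r ((x::'a) \<bullet> b) * exp ((w \<bullet> b) * (x \<bullet> b)))) \<partial>lborel)"
    using assms by (simp add: gk_prod e prod_ennreal prod.distrib[symmetric] mult.assoc)
  also have "\<dots> = (\<Prod>b\<in>(Basis::'a set). (\<integral>\<^sup>+t. ennreal (normal_density 0 r t * exp ((w \<bullet> b) * t)) \<partial>lborel))"
    by (rule nn_integral_lborel_prod[where f="\<lambda>b t. ennreal (normal_density 0 r t * exp ((w \<bullet> b) * t))"]) auto
  also have "\<dots> = (\<Prod>b\<in>(Basis::'a set). ennreal (exp ((w \<bullet> b)\<^sup>2 * r\<^sup>2 / 2)))"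
  proof (rule prod.cong[OF refl])
    fix b :: 'a
    have "(\<integral>\<^sup>+t. ennreal (normal_density 0 r t * exp ((w \<bullet> b) * t)) \<partial>lborel)
        = (\<integral>\<^sup>+t. ennreal (exp ((w \<bullet> b)\<^sup>2 * r\<^sup>2 / 2)) * ennreal (normal_density ((w \<bullet> b) * r\<^sup>2) r t) \<partial>lborel)"
      using assms by (simp add: nd_exp_lin ennreal_mult)
    also have "\<dots> = ennreal (exp ((w \<bullet> b)\<^sup>2 * r\<^sup>2 / 2))"
      using assms by (simp add: nn_integral_cmult nd_nn_integral)
    finally show "(\<integral>\<^sup>+t. ennreal (normal_density 0 r t * exp ((w \<bullet> b) * t)) \<partial>lborel) = ennreal (exp ((w \<bullet> b)\<^sup>2 * r\<^sup>2 / 2))" .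
  qed
  also have "\<dots> = ennreal (exp (\<Sum>b\<in>(Basis::'a set). (w \<bullet> b)\<^sup>2 * r\<^sup>2 / 2))"
    by (simp add: prod_ennreal exp_sum)
  also have "(\<Sum>b\<in>(Basis::'a set). (w \<bullet> b)\<^sup>2 * r\<^sup>2 / 2) = r\<^sup>2 * (norm w)\<^sup>2 / 2"
  proof -
    have "(norm w)\<^sup>2 = (\<Sum>b\<in>(Basis::'a set). (w \<bullet> b)\<^sup>2)"
      unfolding power2_norm_eq_inner by (subst euclidean_inner) (simp add: power2_eq_square)
    then show ?thesis by (simp add: sum_divide_distrib[symmetric] sum_distrib_left[symmetric] mult.commute)
  qed
  finally show ?thesis .
qed

lemma nd_exp_sq:
  assumes "r > 0" "0 < q" "q = 1 - 2 * m * r\<^sup>2"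
  shows "normal_density 0 r t * exp (m * t\<^sup>2) = (1 / sqrt q) * normal_density 0 (r / sqrt q) t"
proof -
  have sq: "sqrt (2 * pi * (r / sqrt q)\<^sup>2) = sqrt (2 * pi * r\<^sup>2) / sqrt q"
    using assms by (simp add: power_divide real_sqrt_divide)
  have ex: "- t\<^sup>2 / (2 * r\<^sup>2) + m * t\<^sup>2 = - t\<^sup>2 / (2 * (r / sqrt q)\<^sup>2)"
    using assms(1,2) unfolding assms(3) by (simp add: power_divide field_simps)
  have "normal_density 0 r t * exp (m * t\<^sup>2) = 1 / sqrt (2 * pi * r\<^sup>2) * exp (- t\<^sup>2 / (2 * r\<^sup>2) + m * t\<^sup>2)"
    unfolding normal_density_def by (simp add: mult_exp_exp add.commute)
  also have "\<dots> = (1 / sqrt q) * normal_density 0 (r / sqrt q) t"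
    unfolding ex normal_density_def sq using assms by simp
  finally show ?thesis .
qed

lemma gk_mgf_sq:
  assumes "r > 0" "0 < q" "q = 1 - 2 * m * r\<^sup>2"
  shows "(\<integral>\<^sup>+x. ennreal (gauss_kernel r (x::'a::euclidean_space) * exp (m * (norm x)\<^sup>2)) \<partial>lborel)
     = ennreal (q powr (- real DIM('a) / 2))"
proof -
  have e: "exp (m * (norm x)\<^sup>2) = (\<Prod>b\<in>Basis. exp (m * (x \<bullet> b)\<^sup>2))" for x :: 'a
  proof -
    have "(norm x)\<^sup>2 = (\<Sum>b\<in>(Basis::'a set). (x \<bullet> b)\<^sup>2)"
      unfolding power2_norm_eq_inner by (subst euclidean_inner) (simp add: power2_eq_square)
    then show ?thesis by (simp add: sum_distrib_left exp_sum)
  qed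
  have "(\<integral>\<^sup>+x. ennreal (gauss_kernel r (x::'a) * exp (m * (norm x)\<^sup>2)) \<partial>lborel)
      = (\<integral>\<^sup>+x. (\<Prod>b\<in>Basis. ennreal (normal_density 0 r ((x::'a) \<bullet> b) * exp (m * (x \<bullet> b)\<^sup>2))) \<partial>lborel)"
    using assms by (simp add: gk_prod e prod_ennreal prod.distrib[symmetric] mult.assoc)
  also have "\<dots> = (\<Prod>b\<in>(Basis::'a set). (\<integral>\<^sup>+t. ennreal (normal_density 0 r t * exp (m * t\<^sup>2)) \<partial>lborel))"
    by (rule nn_integral_lborel_prod[where f="\<lambda>b t. ennreal (normal_density 0 r t * exp (m * t\<^sup>2))"]) auto
  also have "\<dots> = (\<Prod>b\<in>(Basis::'a set). ennreal (1 / sqrt q))"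
  proof (rule prod.cong[OF refl])
    fix b :: 'a
    have "(\<integral>\<^sup>+t. ennreal (normal_density 0 r t * exp (m * t\<^sup>2)) \<partial>lborel)
        = (\<integral>\<^sup>+t. ennreal (1 / sqrt q) * ennreal (normal_density 0 (r / sqrt q) t) \<partial>lborel)"
      using assms by (simp add: nd_exp_sq[OF assms] ennreal_mult[symmetric])
    also have "\<dots> = ennreal (1 / sqrt q)"
      using assms by (simp add: nn_integral_cmult nd_nn_integral)
    finally show "(\<integral>\<^sup>+t. ennreal (normal_density 0 r t * exp (m * t\<^sup>2)) \<partial>lborel) = ennreal (1 / sqrt q)" .
  qed
  also have "\<dots> = ennreal ((1 / sqrt q) ^ DIM('a))"
    using assms by (simp add: prod_ennreal ennreal_power)
  also have "(1 / sqrt q) ^ DIM('a) = q powr (- real DIM('a) / 2)"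
  proof -
    have a: "1 / sqrt q = q powr (-1/2)"
      using assms(2) by (simp add: powr_minus_divide powr_half_sqrt)
    have "(q powr (-1/2)) ^ DIM('a) = (q powr (-1/2)) powr (real DIM('a))"
      using assms(2) by (simp add: powr_realpow)
    also have "\<dots> = q powr (- real DIM('a) / 2)"
      by (simp add: powr_powr)
    finally show ?thesis using a by simp
  qed
  finally show ?thesis .
qed

lemma nn_integral_translate:
  fixes F :: "'a::euclidean_space \<Rightarrow> ennreal"
  assumes [measurable]: "F \<in> borel_measurable borel"
  shows "(\<integral>\<^sup>+x. F (x - y) \<partial>lborel) = (\<integral>\<^sup>+x. F x \<partial>lborel)"
proof -
  have "(\<integral>\<^sup>+x. F x \<partial>lborel) = (\<integral>\<^sup>+x. F x \<partial>(distr lborel borel ((+) (-y))))"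
    by (simp add: lborel_distr_plus)
  also have "\<dots> = (\<integral>\<^sup>+x. F (-y + x) \<partial>lborel)"
    by (subst nn_integral_distr) auto
  finally show ?thesis by simp
qed

lemma lborel_reflect:
  "distr lborel borel (\<lambda>x. y - x) = (lborel :: 'a::euclidean_space measure)"
proof -
  have "(lborel :: 'a measure) = density (distr lborel borel (\<lambda>x. y + (-1) *\<^sub>R x)) (\<lambda>_. \<bar>-1::real\<bar>^DIM('a))"
    by (rule lborel_affine) simp
  then show ?thesis by (simp add: density_1)
qed

lemma integral_reflect:
  fixes F :: "'a::euclidean_space \<Rightarrow> 'b::{banach, second_countable_topology}"
  assumes [measurable]: "F \<in> borel_measurable borel"
  shows "(\<integral>x. F (y - x) \<partial>lborel) = (\<integral>x. F x \<partial>lborel)"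
proof -
  have "(\<integral>x. F x \<partial>lborel) = (\<integral>x. F x \<partial>(distr lborel borel (\<lambda>x. y - x)))"
    by (simp add: lborel_reflect)
  also have "\<dots> = (\<integral>x. F (y - x) \<partial>lborel)"
    by (subst integral_distr) auto
  finally show ?thesis by simp
qed

lemma integrable_reflect:
  fixes F :: "'a::euclidean_space \<Rightarrow> 'b::{banach, second_countable_topology}"
  assumes [measurable]: "F \<in> borel_measurable borel"
  shows "integrable lborel (\<lambda>x. F (y - x)) \<longleftrightarrow> integrable lborel F"
proof -
  have "integrable lborel F \<longleftrightarrow> integrable (distr lborel borel (\<lambda>x. y - x)) F"
    by (simp add: lborel_reflect)
  also have "\<dots> \<longleftrightarrow> integrable lborel (\<lambda>x. F (y - x))"
    by (subst integrable_distr_eq) auto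
  finally show ?thesis by simp
qed

lemma tail_norm:
  fixes r s :: real
  assumes r: "r > 0" and s: "sqrt (real DIM('a)) \<le> s"
  shows "(\<integral>\<^sup>+x. ennreal (gauss_kernel r (x::'a::euclidean_space) * indicator {x. s * r < norm x} x) \<partial>lborel)
         \<le> ennreal (exp (- (s - sqrt (real DIM('a)))\<^sup>2 / 2))"
proof (cases "s = sqrt (real DIM('a))")
  case True
  have "(\<integral>\<^sup>+x. ennreal (gauss_kernel r (x::'a) * indicator {x. s * r < norm x} x) \<partial>lborel)
     \<le> (\<integral>\<^sup>+x. ennreal (gauss_kernel r (x::'a)) \<partial>lborel)"
    using r by (intro nn_integral_mono) (auto simp: gk_nonneg indicator_def)
  also have "\<dots> = 1" using gk_nn_integral[OF r] .
  finally show ?thesis using True by simp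
next
  case False
  define k where "k = sqrt (real DIM('a))"
  have k0: "k > 0" unfolding k_def by simp
  have ks: "k < s" using False s unfolding k_def by simp
  have dk: "real DIM('a) = k\<^sup>2" unfolding k_def by simp
  define m where "m = (1 - k\<^sup>2 / s\<^sup>2) / (2 * r\<^sup>2)"
  define q where "q = k\<^sup>2 / s\<^sup>2"
  have s0: "s > 0" using k0 ks by simp
  have q0: "q > 0" unfolding q_def using k0 s0 by simp
  have qm: "q = 1 - 2 * m * r\<^sup>2" unfolding q_def m_def using r by (simp add: field_simps)
  have m0: "m \<ge> 0" unfolding m_def using ks k0 r by (simp add: field_simps power_strict_mono)
  have pt: "ennreal (gauss_kernel r x * indicator {x. s * r < norm x} x)
        \<le> ennreal (exp (- m * s\<^sup>2 * r\<^sup>2)) * ennreal (gauss_kernel r x * exp (m * (norm x)\<^sup>2))" for x :: 'a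
  proof (cases "s * r < norm x")
    case True
    have "(s * r)\<^sup>2 \<le> (norm x)\<^sup>2" using True s0 r by (intro power_mono) auto
    then have "m * (s*r)\<^sup>2 \<le> m * (norm x)\<^sup>2" using m0 by (intro mult_left_mono) auto
    then have "1 \<le> exp (- m * s\<^sup>2 * r\<^sup>2) * exp (m * (norm x)\<^sup>2)"
      by (simp add: mult_exp_exp power_mult_distrib)
    then have "gauss_kernel r x * 1 \<le> gauss_kernel r x * (exp (- m * s\<^sup>2 * r\<^sup>2) * exp (m * (norm x)\<^sup>2))"
      using gk_nonneg[OF r] by (intro mult_left_mono) auto
    then show ?thesis using True
      by (simp add: ennreal_mult[symmetric] mult_ac gk_nonneg[OF r])
  qed (simp add: gk_nonneg[OF r])
  have "(\<integral>\<^sup>+x. ennreal (gauss_kernel r (x::'a) * indicator {x. s * r < norm x} x) \<partial>lborel)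
     \<le> (\<integral>\<^sup>+x. ennreal (exp (- m * s\<^sup>2 * r\<^sup>2)) * ennreal (gauss_kernel r (x::'a) * exp (m * (norm x)\<^sup>2)) \<partial>lborel)"
    by (rule nn_integral_mono) (rule pt)
  also have "\<dots> = ennreal (exp (- m * s\<^sup>2 * r\<^sup>2)) * ennreal (q powr (- real DIM('a) / 2))"
    by (subst nn_integral_cmult) (auto simp: gk_mgf_sq[OF r q0 qm])
  also have "\<dots> = ennreal (exp (- m * s\<^sup>2 * r\<^sup>2) * q powr (- real DIM('a) / 2))"
    by (simp add: ennreal_mult)
  also have "\<dots> \<le> ennreal (exp (- (s - sqrt (real DIM('a)))\<^sup>2 / 2))"
  proof (intro ennreal_leI)
    have e1: "- m * s\<^sup>2 * r\<^sup>2 = - (s\<^sup>2 - k\<^sup>2) / 2"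
      unfolding m_def using r s0 by (simp add: field_simps)
    have e2: "q powr (- real DIM('a) / 2) = exp (- k\<^sup>2 / 2 * ln q)"
      using q0 unfolding dk by (simp add: powr_def)
    have lq: "ln q = - 2 * ln (s / k)"
      unfolding q_def using k0 s0 by (simp add: ln_div power2_eq_square ln_mult)
    have ln1: "ln (s / k) \<le> s / k - 1" using k0 s0 by (intro ln_le_minus_one) simp
    have "k\<^sup>2 * ln (s / k) \<le> k\<^sup>2 * (s / k - 1)" using ln1 by (intro mult_left_mono) auto
    also have "k\<^sup>2 * (s / k - 1) = s * k - k\<^sup>2" using k0 by (simp add: field_simps power2_eq_square)
    finally have key: "k\<^sup>2 * ln (s / k) \<le> s * k - k\<^sup>2" .
    have "- (s\<^sup>2 - k\<^sup>2) / 2 + - k\<^sup>2 / 2 * ln q \<le> - (s - k)\<^sup>2 / 2"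
    proof -
      have eq: "- k\<^sup>2 / 2 * ln q = k\<^sup>2 * ln (s / k)" unfolding lq by simp
      have "- (s\<^sup>2 - k\<^sup>2) / 2 + - k\<^sup>2 / 2 * ln q = - (s\<^sup>2 - k\<^sup>2) / 2 + k\<^sup>2 * ln (s / k)"
        unfolding eq ..
      also have "\<dots> \<le> - (s\<^sup>2 - k\<^sup>2) / 2 + (s * k - k\<^sup>2)" using key by simp
      also have "\<dots> = - (s - k)\<^sup>2 / 2" by (simp add: power2_diff field_simps)
      finally show ?thesis .
    qed
    then show "exp (- m * s\<^sup>2 * r\<^sup>2) * q powr (- real DIM('a) / 2) \<le> exp (- (s - sqrt (real DIM('a)))\<^sup>2 / 2)"
      unfolding e1 e2 mult_exp_exp k_def[symmetric] by simp
  qed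
  finally show ?thesis .
qed

lemma tail_lin:
  fixes r a :: real and w :: "'a::euclidean_space"
  assumes r: "r > 0" and w: "w \<noteq> 0" and a: "a > 0"
  shows "(\<integral>\<^sup>+x. ennreal (gauss_kernel r x * indicator {x. a < w \<bullet> x} x) \<partial>lborel)
         \<le> ennreal (exp (- a\<^sup>2 / (2 * r\<^sup>2 * (norm w)\<^sup>2)))"
proof -
  define m where "m = a / (r\<^sup>2 * (norm w)\<^sup>2)"
  have nw: "norm w > 0" using w by simp
  have m0: "m > 0" unfolding m_def using a r nw by simp
  have pt: "ennreal (gauss_kernel r x * indicator {x. a < w \<bullet> x} x)
        \<le> ennreal (exp (- m * a)) * ennreal (gauss_kernel r x * exp ((m *\<^sub>R w) \<bullet> x))" for x :: 'a
  proof (cases "a < w \<bullet> x")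
    case True
    have "m * a \<le> m * (w \<bullet> x)" using True m0 by simp
    then have "1 \<le> exp (- m * a) * exp ((m *\<^sub>R w) \<bullet> x)"
      by (simp add: mult_exp_exp)
    then have "gauss_kernel r x * 1 \<le> gauss_kernel r x * (exp (- m * a) * exp ((m *\<^sub>R w) \<bullet> x))"
      using gk_nonneg[OF r] by (intro mult_left_mono) auto
    then show ?thesis using True
      by (simp add: ennreal_mult[symmetric] mult_ac gk_nonneg[OF r])
  qed (simp add: gk_nonneg[OF r])
  have "(\<integral>\<^sup>+x. ennreal (gauss_kernel r x * indicator {x. a < w \<bullet> x} x) \<partial>lborel)
     \<le> (\<integral>\<^sup>+x. ennreal (exp (- m * a)) * ennreal (gauss_kernel r x * exp ((m *\<^sub>R w) \<bullet> x)) \<partial>lborel)"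
    by (intro nn_integral_mono pt)
  also have "\<dots> = ennreal (exp (- m * a)) * ennreal (exp (r\<^sup>2 * (norm (m *\<^sub>R w))\<^sup>2 / 2))"
    by (subst nn_integral_cmult, simp, subst gk_mgf_lin[OF r], rule refl)
  also have "\<dots> = ennreal (exp (- m * a + r\<^sup>2 * (norm (m *\<^sub>R w))\<^sup>2 / 2))"
    by (simp add: ennreal_mult[symmetric] mult_exp_exp)
  also have "- m * a + r\<^sup>2 * (norm (m *\<^sub>R w))\<^sup>2 / 2 = - a\<^sup>2 / (2 * r\<^sup>2 * (norm w)\<^sup>2)"
    unfolding m_def using r nw by (simp add: power_mult_distrib field_simps power2_eq_square)
  finally show ?thesis .
qed

lemma exp_lower_pow:
  assumes "0 \<le> x" "n > 0"
  shows "(1 + x / real n) ^ n \<le> exp x"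
proof -
  have "(1 + x / real n) ^ n \<le> exp (x / real n) ^ n"
    using assms by (intro power_mono) (auto simp: exp_ge_add_one_self add.commute)
  also have "\<dots> = exp (real n * (x / real n))" by (rule exp_of_nat_mult[symmetric])
  also have "real n * (x / real n) = x" using assms by simp
  finally show ?thesis .
qed

lemma exp_upper_pow:
  assumes "0 \<le> x" "x < real n"
  shows "exp x \<le> (real n / (real n - x)) ^ n"
proof -
  have n: "real n > 0" using assms by simp
  have "1 - x / real n \<le> exp (- (x / real n))"
    using exp_ge_add_one_self[of "- (x / real n)"] by simp
  moreover have "0 < 1 - x / real n" using assms n by (simp add: field_simps)
  ultimately have "exp (x / real n) \<le> 1 / (1 - x / real n)"
    by (simp add: exp_minus field_simps)
  also have "1 / (1 - x / real n) = real n / (real n - x)" using n by (simp add: field_simps)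
  finally have "exp (x / real n) ^ n \<le> (real n / (real n - x)) ^ n"
    by (intro power_mono) auto
  also have "exp (x / real n) ^ n = exp x" using n by (simp add: exp_of_nat_mult[symmetric])
  finally show ?thesis .
qed

lemma num1: "exp (1/4 :: real) + 2 * exp (- 11/8) \<le> 2"
proof -
  have a: "exp (1/4 :: real) \<le> (32/31)^8"
    using exp_upper_pow[of "1/4" 8] by simp
  have "(1 + (11/8) / real (8::nat)) ^ 8 \<le> exp (11/8 :: real)"
    by (rule exp_lower_pow) auto
  then have b: "exp (- 11/8 :: real) \<le> (64/75)^8"
    by (simp add: exp_minus field_simps)
  have "(32/31::real)^8 + 2 * (64/75)^8 \<le> 2" by (simp add: power_divide)
  with a b show ?thesis by simp
qed

lemma num2: "exp (9/40 :: real) + 2 * exp (- 41/40) \<le> 2"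
proof -
  have a: "exp (9/40 :: real) \<le> (320/311)^8"
    using exp_upper_pow[of "9/40" 8] by simp
  have "(1 + (41/40) / real (32::nat)) ^ 32 \<le> exp (41/40 :: real)"
    by (rule exp_lower_pow) auto
  then have b: "exp (- 41/40 :: real) \<le> (1280/1321)^32"
    by (simp add: exp_minus field_simps)
  have "(320/311::real)^8 + 2 * (1280/1321)^32 \<le> 2" by (simp add: power_divide)
  with a b show ?thesis by simp
qed

lemma num_main:
  fixes \<eta> :: real
  assumes "0 < \<eta>" "\<eta> < 1"
  shows "exp (- (1/\<eta> - \<eta>/4)\<^sup>2 / 2) + 2 * exp (- (2/\<eta> - \<eta>/4)\<^sup>2 / 2) \<le> 2 * exp (- 1 / (2 * \<eta>\<^sup>2))"
proof -
  define q where "q = \<eta>\<^sup>2"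
  have q0: "0 < q" and q1: "q < 1" unfolding q_def using assms by (auto simp: power_less_one_iff)
  define E where "E = exp (- 1 / (2 * q))"
  have E0: "E > 0" unfolding E_def by simp
  have e1: "- (1/\<eta> - \<eta>/4)\<^sup>2 / 2 = - 1 / (2 * q) + (1/4 - q/32)"
    unfolding q_def using assms by (simp add: power2_eq_square field_simps)
  have e2: "- (2/\<eta> - \<eta>/4)\<^sup>2 / 2 = - 1 / (2 * q) + (1/2 - 3 / (2*q) - q/32)"
    unfolding q_def using assms by (simp add: power2_eq_square field_simps)
  have "exp (- (1/\<eta> - \<eta>/4)\<^sup>2 / 2) + 2 * exp (- (2/\<eta> - \<eta>/4)\<^sup>2 / 2)
      = E * (exp (1/4 - q/32) + 2 * exp (1/2 - 3 / (2*q) - q/32))"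
    unfolding e1 e2 E_def exp_add by (simp only: distrib_left mult.left_commute)
  also have "\<dots> \<le> E * 2"
  proof (intro mult_left_mono)
    show "0 \<le> E" using E0 by simp
    show "exp (1/4 - q/32) + 2 * exp (1/2 - 3 / (2*q) - q/32) \<le> 2"
    proof (cases "q \<le> 4/5")
      case True
      have "3 / (2*q) \<ge> 15/8" using True q0 by (simp add: field_simps)
      then have a: "exp (1/2 - 3 / (2*q) - q/32) \<le> exp (- 11/8)" using q0 by simp
      have b: "exp (1/4 - q/32) \<le> exp (1/4)" using q0 by simp
      show ?thesis using a b num1 by linarith
    next
      case False
      have "3 / (2*q) \<ge> 3/2" using q1 q0 by (simp add: field_simps)
      then have a: "exp (1/2 - 3 / (2*q) - q/32) \<le> exp (- 41/40)" using False by simp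
      have b: "exp (1/4 - q/32) \<le> exp (9/40)" using False by simp
      show ?thesis using a b num2 by linarith
    qed
  qed
  finally show ?thesis unfolding E_def q_def by (simp add: mult.commute)
qed

lemma gradient_has_derivative:
  fixes f :: "'a::euclidean_space \<Rightarrow> real"
  assumes "f differentiable (at x)"
  shows "(f has_derivative (\<lambda>h. gradient f x \<bullet> h)) (at x)"
proof -
  obtain D where D: "(f has_derivative D) (at x)" using assms by (auto simp: differentiable_def)
  have lin: "linear D" using has_derivative_bounded_linear[OF D] bounded_linear.linear by blast
  define v where "v = (\<Sum>b\<in>Basis. D b *\<^sub>R b)"
  have "D h = v \<bullet> h" for h
  proof -
    have "D h = D (\<Sum>b\<in>Basis. (h \<bullet> b) *\<^sub>R b)" by (simp add: euclidean_representation)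
    also have "\<dots> = (\<Sum>b\<in>Basis. (h \<bullet> b) * D b)"
      using lin by (simp add: linear_sum linear_scale)
    also have "\<dots> = (\<Sum>b\<in>Basis. D b * (b \<bullet> h))" by (simp add: inner_commute mult.commute)
    also have "\<dots> = v \<bullet> h" unfolding v_def by (simp add: inner_sum_left)
    finally show ?thesis .
  qed
  then have "D = (\<lambda>h. v \<bullet> h)" by auto
  with D have "(f has_derivative (\<lambda>h. v \<bullet> h)) (at x)" by simp
  then show ?thesis unfolding gradient_def by (rule someI)
qed

lemma deriv_norm_bound_local:
  fixes F :: "'a::real_normed_vector \<Rightarrow> 'b::real_normed_vector"
  assumes D: "(F has_derivative D) (at y)"
    and ev: "eventually (\<lambda>z. norm (F z - F y) \<le> K * norm (z - y)) (at y)"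
  shows "norm (D h) \<le> K * norm h"
proof (cases "h = 0")
  case True
  have "linear D" using has_derivative_bounded_linear[OF D] bounded_linear.linear by blast
  then show ?thesis using True by (simp add: linear_0)
next
  case False
  have lin: "linear D" using has_derivative_bounded_linear[OF D] bounded_linear.linear by blast
  obtain d1 where d1: "d1 > 0" "\<And>z. z \<noteq> y \<Longrightarrow> dist z y < d1 \<Longrightarrow> norm (F z - F y) \<le> K * norm (z - y)"
    using ev unfolding eventually_at by blast
  show ?thesis
  proof (rule field_le_epsilon)
    fix e :: real assume e: "e > 0"
    have "e / norm h > 0" using e False by simp
    then obtain d2 where d2: "d2 > 0" "\<And>x'. 0 < norm (x' - y) \<and> norm (x' - y) < d2 \<longrightarrow>
        norm (F x' - F y - D (x' - y)) / norm (x' - y) < e / norm h"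
      using D unfolding has_derivative_at' by blast
    define t where "t = min d1 d2 / (2 * norm h)"
    have t0: "t > 0" unfolding t_def using d1 d2 False by simp
    have tn: "norm (t *\<^sub>R h) < d1" "norm (t *\<^sub>R h) < d2"
      unfolding t_def using d1 d2 False by (auto simp: field_simps)
    have ne: "t *\<^sub>R h \<noteq> 0" using t0 False by simp
    have a: "norm (F (y + t *\<^sub>R h) - F y) \<le> K * norm (t *\<^sub>R h)"
      using d1(2)[of "y + t *\<^sub>R h"] tn ne by (simp add: dist_norm)
    have "norm (F (y + t *\<^sub>R h) - F y - D (t *\<^sub>R h)) / norm (t *\<^sub>R h) < e / norm h"
      using d2(2)[of "y + t *\<^sub>R h"] tn ne by simp
    then have b: "norm (F (y + t *\<^sub>R h) - F y - D (t *\<^sub>R h)) \<le> e * t"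
      using t0 False by (simp add: field_simps)
    have "norm (D (t *\<^sub>R h)) \<le> norm (F (y + t *\<^sub>R h) - F y) + norm (F (y + t *\<^sub>R h) - F y - D (t *\<^sub>R h))"
      by (metis norm_minus_commute norm_triangle_sub)
    also have "\<dots> \<le> K * (t * norm h) + e * t" using a b t0 by simp
    finally have "t * norm (D h) \<le> t * (K * norm h + e)"
      using lin t0 by (simp add: linear_scale algebra_simps)
    then show "norm (D h) \<le> K * norm h + e" using t0 by simp
  qed
qed

lemma gradient_norm_le:
  fixes f :: "'a::euclidean_space \<Rightarrow> real"
  assumes "f differentiable (at x)" and L: "L-lipschitz_on UNIV f"
  shows "norm (gradient f x) \<le> L"
proof -
  let ?v = "gradient f x"
  have L0: "0 \<le> L" using lipschitz_on_nonneg[OF L] .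
  have "norm (?v \<bullet> ?v) \<le> L * norm ?v"
    using deriv_norm_bound_local[OF gradient_has_derivative[OF assms(1)], of L ?v]
      lipschitz_on_normD[OF L] by (auto intro!: always_eventually)
  then have "norm ?v * norm ?v \<le> L * norm ?v" by (simp add: power2_norm_eq_inner[symmetric] power2_eq_square)
  then show ?thesis using L0 by (cases "norm ?v = 0") (auto simp: mult_le_cancel_right)
qed

lemma gradient_component_lim:
  fixes f :: "'a::euclidean_space \<Rightarrow> real"
  assumes "f differentiable (at x)"
  shows "(\<lambda>n. (f (x + inverse (real (Suc n)) *\<^sub>R b) - f x) / inverse (real (Suc n))) \<longlonglongrightarrow> gradient f x \<bullet> b"
proof -
  have D: "(f has_derivative (\<lambda>h. gradient f x \<bullet> h)) (at x)" by (rule gradient_has_derivative[OF assms])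
  have "((\<lambda>t. x + t *\<^sub>R b) has_derivative (\<lambda>t. t *\<^sub>R b)) (at 0)"
    by (auto intro!: derivative_eq_intros)
  moreover have "(f has_derivative (\<lambda>h. gradient f x \<bullet> h)) (at (x + 0 *\<^sub>R b))" using D by simp
  ultimately have "((\<lambda>t. f (x + t *\<^sub>R b)) has_derivative (\<lambda>t. gradient f x \<bullet> (t *\<^sub>R b))) (at 0)"
    by (rule has_derivative_compose)
  then have "((\<lambda>t. f (x + t *\<^sub>R b)) has_field_derivative (gradient f x \<bullet> b)) (at 0)"
    unfolding has_field_derivative_def by (rule has_derivative_eq_rhs) (auto simp: fun_eq_iff)
  then have lim: "((\<lambda>t. (f (x + t *\<^sub>R b) - f x) / t) \<longlongrightarrow> gradient f x \<bullet> b) (at 0)"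
    unfolding has_field_derivative_iff by simp
  have seq: "filterlim (\<lambda>n. inverse (real (Suc n))) (at (0::real)) sequentially"
    by (rule filterlim_atI) (auto simp del: of_nat_Suc intro: LIMSEQ_inverse_real_of_nat)
  show ?thesis using filterlim_compose[OF lim seq] by (simp add: o_def)
qed

lemma gradient_measurable:
  fixes f :: "'a::euclidean_space \<Rightarrow> real"
  assumes "f differentiable_on UNIV"
  shows "gradient f \<in> borel_measurable borel"
proof -
  have dif: "f differentiable (at x)" for x using assms by (simp add: differentiable_on_def)
  have cont: "continuous_on UNIV f" using assms differentiable_imp_continuous_on by blast
  then have fm[measurable]: "f \<in> borel_measurable borel" by (rule borel_measurable_continuous_onI)
  have comp[measurable]: "(\<lambda>x. gradient f x \<bullet> b) \<in> borel_measurable borel" for b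
  proof (rule borel_measurable_LIMSEQ_real)
    show "(\<lambda>n. (f (x + inverse (real (Suc n)) *\<^sub>R b) - f x) / inverse (real (Suc n))) \<longlonglongrightarrow> gradient f x \<bullet> b" for x
      by (rule gradient_component_lim[OF dif])
    show "(\<lambda>x. (f (x + inverse (real (Suc n)) *\<^sub>R b) - f x) / inverse (real (Suc n))) \<in> borel_measurable borel" for n
      by measurable
  qed
  have "gradient f = (\<lambda>x. \<Sum>b\<in>Basis. (gradient f x \<bullet> b) *\<^sub>R b)"
    by (simp add: euclidean_representation)
  also have "\<dots> \<in> borel_measurable borel" by measurable
  finally show ?thesis .
qed

lemma gk_integrable:
  assumes "r > 0"
  shows "integrable lborel (gauss_kernel r :: 'a::euclidean_space \<Rightarrow> real)"
  by (rule integrableI_nn_integral_finite[where x=1]) (use assms gk_nn_integral[OF assms] gk_nonneg in auto)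

lemma gk_integral:
  assumes "r > 0"
  shows "(\<integral>x. gauss_kernel r (x::'a::euclidean_space) \<partial>lborel) = 1"
proof -
  have "(\<integral>x. gauss_kernel r (x::'a) \<partial>lborel) = enn2real (\<integral>\<^sup>+x. ennreal (gauss_kernel r (x::'a)) \<partial>lborel)"
    by (rule integral_eq_nn_integral) (auto simp: gk_nonneg[OF assms])
  then show ?thesis using gk_nn_integral[OF assms] by simp
qed

lemma gk_norm_integrable:
  assumes r: "r > 0"
  shows "integrable lborel (\<lambda>t::'a::euclidean_space. gauss_kernel r t * norm t)"
proof -
  define m where "m = 1 / (4 * r\<^sup>2)"
  have qm: "(1/2::real) = 1 - 2 * m * r\<^sup>2" unfolding m_def using r by simp
  have i1: "integrable lborel (\<lambda>t::'a. gauss_kernel r t * exp (m * (norm t)\<^sup>2))"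
    by (rule integrableI_nn_integral_finite[OF _ _ gk_mgf_sq[OF r _ qm]])
       (auto simp: gk_nonneg[OF r])
  then have i2: "integrable lborel (\<lambda>t::'a. (2 * r) * (gauss_kernel r t * exp (m * (norm t)\<^sup>2)))"
    by simp
  show ?thesis
  proof (rule Bochner_Integration.integrable_bound[OF i2])
    show "(\<lambda>t::'a. gauss_kernel r t * norm t) \<in> borel_measurable lborel" by measurable
    show "AE x in lborel. norm (gauss_kernel r (x::'a) * norm x) \<le> norm (2 * r * (gauss_kernel r x * exp (m * (norm x)\<^sup>2)))"
    proof (rule AE_I2)
      fix x :: 'a assume "x \<in> space lborel"
      define u where "u = norm x / (2 * r)"
      have "0 \<le> (u - 1/2)\<^sup>2" by simp
      then have "u \<le> 1 + u\<^sup>2" by (simp add: power2_diff field_simps)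
      also have "\<dots> \<le> exp (u\<^sup>2)" by (rule exp_ge_add_one_self)
      also have "u\<^sup>2 = m * (norm x)\<^sup>2" unfolding u_def m_def by (simp add: power_divide field_simps)
      finally have "norm x \<le> 2 * r * exp (m * (norm x)\<^sup>2)" unfolding u_def using r by (simp add: field_simps)
      then have "gauss_kernel r x * norm x \<le> gauss_kernel r x * (2 * r * exp (m * (norm x)\<^sup>2))"
        using gk_nonneg[OF r] by (intro mult_left_mono) auto
      then show "norm (gauss_kernel r x * norm x) \<le> norm (2 * r * (gauss_kernel r x * exp (m * (norm x)\<^sup>2)))"
        using r gk_nonneg[OF r, of x] by (simp add: abs_mult mult_ac)
    qed
  qed
qed

lemma lipschitz_abs_bound:
  fixes f :: "'a::euclidean_space \<Rightarrow> real"
  assumes "L-lipschitz_on UNIV f"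
  shows "\<bar>f (y - t)\<bar> \<le> \<bar>f y\<bar> + L * norm t"
  using lipschitz_on_normD[OF assms, of "y - t" y] by simp

context
  fixes f :: "'a::euclidean_space \<Rightarrow> real" and L r :: real
  assumes dif: "f differentiable_on UNIV"
    and lip: "L-lipschitz_on UNIV f"
    and r: "r > 0"
begin

lemma f_meas[measurable]: "f \<in> borel_measurable borel"
  using dif differentiable_imp_continuous_on borel_measurable_continuous_onI by blast

lemma grad_meas[measurable]: "gradient f \<in> borel_measurable borel"
  by (rule gradient_measurable[OF dif])

lemma difat: "f differentiable (at x)"
  using dif by (simp add: differentiable_on_def)

lemma grad_le: "norm (gradient f x) \<le> L"
  by (rule gradient_norm_le[OF difat lip])

lemma gk_abs: "\<bar>gauss_kernel r x\<bar> = gauss_kernel r x"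
  using gk_nonneg[OF r, of x] by simp

lemma L0: "0 \<le> L" using lipschitz_on_nonneg[OF lip] .

lemma int_gf: "integrable lborel (\<lambda>t. gauss_kernel r t * f (y - t))"
proof -
  have i: "integrable lborel (\<lambda>t. \<bar>f y\<bar> * gauss_kernel r t + L * (gauss_kernel r t * norm t))"
    using gk_integrable[OF r] gk_norm_integrable[OF r] by auto
  show ?thesis
  proof (rule Bochner_Integration.integrable_bound[OF i])
    show "(\<lambda>t. gauss_kernel r t * f (y - t)) \<in> borel_measurable lborel" by measurable
    show "AE x in lborel. norm (gauss_kernel r (x::'a) * f (y - x)) \<le> norm (\<bar>f y\<bar> * gauss_kernel r x + L * (gauss_kernel r x * norm x))"
    proof (rule AE_I2)
      fix x :: 'a assume "x \<in> space lborel"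
      have "gauss_kernel r x * \<bar>f (y - x)\<bar> \<le> gauss_kernel r x * (\<bar>f y\<bar> + L * norm x)"
        using gk_nonneg[OF r] lipschitz_abs_bound[OF lip] by (intro mult_left_mono) auto
      then show "norm (gauss_kernel r x * f (y - x)) \<le> norm (\<bar>f y\<bar> * gauss_kernel r x + L * (gauss_kernel r x * norm x))"
        using gk_nonneg[OF r, of x] L0 by (simp add: abs_mult algebra_simps)
    qed
  qed
qed

lemma int_grad: "integrable lborel (\<lambda>t. gauss_kernel r t *\<^sub>R gradient f (y - t))"
proof (rule Bochner_Integration.integrable_bound[OF integrable_mult_right[OF gk_integrable[OF r], of L]])
  show "(\<lambda>t. gauss_kernel r t *\<^sub>R gradient f (y - t)) \<in> borel_measurable lborel" by measurable
  show "AE x in lborel. norm (gauss_kernel r (x::'a) *\<^sub>R gradient f (y - x)) \<le> norm (L * gauss_kernel r x)"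
  proof (rule AE_I2)
    fix x :: 'a assume "x \<in> space lborel"
    have "\<bar>gauss_kernel r x\<bar> * norm (gradient f (y - x)) \<le> \<bar>gauss_kernel r x\<bar> * L"
      using grad_le by (intro mult_left_mono) auto
    then show "norm (gauss_kernel r x *\<^sub>R gradient f (y - x)) \<le> norm (L * gauss_kernel r x)"
      using L0 by (simp add: abs_mult mult.commute)
  qed
qed


lemma grad_smooth_deriv:
  "(gauss_smooth r f has_derivative (\<lambda>h. (\<integral>t. gauss_kernel r t *\<^sub>R gradient f (y - t) \<partial>lborel) \<bullet> h)) (at y)"
proof -
  define V where "V = (\<integral>t. gauss_kernel r t *\<^sub>R gradient f (y - t) \<partial>lborel)"
  define R where "R = (\<lambda>z t. f (z - t) - f (y - t) - gradient f (y - t) \<bullet> (z - y))"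
  define \<Phi> where "\<Phi> = (\<lambda>z. \<integral>t. gauss_kernel r t * \<bar>R z t\<bar> / norm (z - y) \<partial>lborel)"
  have Rm[measurable]: "(\<lambda>t. R z t) \<in> borel_measurable borel" for z unfolding R_def by measurable
  have Rb: "\<bar>R z t\<bar> \<le> 2 * L * norm (z - y)" for z t
  proof -
    have "\<bar>f (z - t) - f (y - t)\<bar> \<le> L * norm (z - y)"
      using lipschitz_on_normD[OF lip, of "z - t" "y - t"] by simp
    moreover have "\<bar>gradient f (y - t) \<bullet> (z - y)\<bar> \<le> L * norm (z - y)"
      using Cauchy_Schwarz_ineq2[of "gradient f (y - t)" "z - y"] grad_le[of "y - t"]
      by (meson mult_right_mono norm_ge_zero order_trans)
    ultimately show ?thesis unfolding R_def by linarith
  qed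
  have eq: "gauss_smooth r f z - gauss_smooth r f y - V \<bullet> (z - y) = (\<integral>t. gauss_kernel r t * R z t \<partial>lborel)" for z
  proof -
    have "V \<bullet> (z - y) = (\<integral>t. (gauss_kernel r t *\<^sub>R gradient f (y - t)) \<bullet> (z - y) \<partial>lborel)"
      unfolding V_def by (rule integral_inner_left[symmetric]) (rule int_grad)
    also have "\<dots> = (\<integral>t. gauss_kernel r t * (gradient f (y - t) \<bullet> (z - y)) \<partial>lborel)" by simp
    finally have a: "V \<bullet> (z - y) = \<dots>" .
    have i3: "integrable lborel (\<lambda>t. gauss_kernel r t * (gradient f (y - t) \<bullet> (z - y)))"
      using integrable_inner_left[OF int_grad[of y], of "z - y"] by simp
    have "gauss_smooth r f z - gauss_smooth r f y - V \<bullet> (z - y)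
        = (\<integral>t. gauss_kernel r t * f (z - t) - gauss_kernel r t * f (y - t) - gauss_kernel r t * (gradient f (y - t) \<bullet> (z - y)) \<partial>lborel)"
      unfolding gauss_smooth_def a using int_gf[of z] int_gf[of y] i3
      by (simp add: Bochner_Integration.integral_diff)
    also have "\<dots> = (\<integral>t. gauss_kernel r t * R z t \<partial>lborel)"
      unfolding R_def by (simp add: algebra_simps)
    finally show ?thesis .
  qed
  have intR: "integrable lborel (\<lambda>t. gauss_kernel r t * R z t)" for z
  proof -
    have i3: "integrable lborel (\<lambda>t. gauss_kernel r t * (gradient f (y - t) \<bullet> (z - y)))"
      using integrable_inner_left[OF int_grad[of y], of "z - y"] by simp
    have "integrable lborel (\<lambda>t. gauss_kernel r t * f (z - t) - gauss_kernel r t * f (y - t) - gauss_kernel r t * (gradient f (y - t) \<bullet> (z - y)))"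
      using int_gf[of z] int_gf[of y] i3 by (intro Bochner_Integration.integrable_diff)
    moreover have "(\<lambda>t. gauss_kernel r t * R z t) = (\<lambda>t. gauss_kernel r t * f (z - t) - gauss_kernel r t * f (y - t) - gauss_kernel r t * (gradient f (y - t) \<bullet> (z - y)))"
      unfolding R_def by (simp add: fun_eq_iff right_diff_distrib)
    ultimately show ?thesis by simp
  qed
  have le: "norm (norm (gauss_smooth r f z - gauss_smooth r f y - V \<bullet> (z - y)) / norm (z - y)) \<le> \<Phi> z" for z
  proof -
    have "\<bar>\<integral>t. gauss_kernel r t * R z t \<partial>lborel\<bar> \<le> (\<integral>t. \<bar>gauss_kernel r t * R z t\<bar> \<partial>lborel)"
      by (rule integral_abs_bound)
    also have "\<dots> = (\<integral>t. gauss_kernel r t * \<bar>R z t\<bar> \<partial>lborel)"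
      using gk_nonneg[OF r] by (intro Bochner_Integration.integral_cong) (simp_all add: abs_mult gk_abs)
    finally have "\<bar>\<integral>t. gauss_kernel r t * R z t \<partial>lborel\<bar> / norm (z - y) \<le> (\<integral>t. gauss_kernel r t * \<bar>R z t\<bar> \<partial>lborel) / norm (z - y)"
      by (simp add: divide_right_mono)
    also have "\<dots> = \<Phi> z" unfolding \<Phi>_def by simp
    finally show ?thesis unfolding eq by simp
  qed
  have lim\<Phi>: "(\<Phi> \<longlongrightarrow> 0) (at y)"
    unfolding tendsto_at_iff_sequentially
  proof (intro allI impI)
    fix X :: "nat \<Rightarrow> 'a" assume X: "\<forall>i. X i \<in> UNIV - {y}" and Xl: "X \<longlonglongrightarrow> y"
    have "(\<lambda>i. \<integral>t. gauss_kernel r t * \<bar>R (X i) t\<bar> / norm (X i - y) \<partial>lborel) \<longlonglongrightarrow> integral\<^sup>L (lborel :: 'a measure) (\<lambda>t. 0 :: real)"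
    proof (rule integral_dominated_convergence[where w="\<lambda>t. 2 * L * gauss_kernel r t" and f="\<lambda>t. 0"
        and s="\<lambda>i t. gauss_kernel r t * \<bar>R (X i) t\<bar> / norm (X i - y)"])
      show "(\<lambda>t. 0::real) \<in> borel_measurable lborel" by simp
      show "(\<lambda>t. gauss_kernel r t * \<bar>R (X i) t\<bar> / norm (X i - y)) \<in> borel_measurable lborel" for i
        by measurable
      show "integrable lborel (\<lambda>t. 2 * L * gauss_kernel r (t::'a))" by (intro integrable_mult_right gk_integrable[OF r])
      show "AE t in lborel. (\<lambda>i. gauss_kernel r t * \<bar>R (X i) t\<bar> / norm (X i - y)) \<longlonglongrightarrow> 0"
      proof (rule AE_I2)
        fix t :: 'a assume "t \<in> space lborel"
        define p where "p = y - t"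
        have "(f has_derivative (\<lambda>h. gradient f p \<bullet> h)) (at p)" by (rule gradient_has_derivative[OF difat])
        then have "((\<lambda>z'. norm (f z' - f p - gradient f p \<bullet> (z' - p)) / norm (z' - p)) \<longlongrightarrow> 0) (at p)"
          unfolding has_derivative_iff_norm by simp
        then have H: "\<forall>X. (\<forall>i. X i \<in> UNIV - {p}) \<longrightarrow> X \<longlonglongrightarrow> p \<longrightarrow> ((\<lambda>z'. norm (f z' - f p - gradient f p \<bullet> (z' - p)) / norm (z' - p)) \<circ> X) \<longlonglongrightarrow> 0"
          unfolding tendsto_at_iff_sequentially .
        have h1: "\<And>i. X i - t \<in> UNIV - {p}" using X unfolding p_def by auto
        have h2: "(\<lambda>i. X i - t) \<longlonglongrightarrow> p" unfolding p_def by (intro tendsto_intros Xl)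
        have "(\<lambda>i. norm (f (X i - t) - f p - gradient f p \<bullet> (X i - t - p)) / norm (X i - t - p)) \<longlonglongrightarrow> 0"
          using H[rule_format, OF h1 h2] by (simp add: o_def)
        then have "(\<lambda>i. \<bar>R (X i) t\<bar> / norm (X i - y)) \<longlonglongrightarrow> 0"
          unfolding R_def p_def by (simp add: algebra_simps)
        then have "(\<lambda>i. gauss_kernel r t * (\<bar>R (X i) t\<bar> / norm (X i - y))) \<longlonglongrightarrow> 0"
          by (rule tendsto_mult_right_zero)
        then show "(\<lambda>i. gauss_kernel r t * \<bar>R (X i) t\<bar> / norm (X i - y)) \<longlonglongrightarrow> 0" by simp
      qed
      show "AE t in lborel. norm (gauss_kernel r t * \<bar>R (X i) t\<bar> / norm (X i - y)) \<le> 2 * L * gauss_kernel r t" for i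
      proof (rule AE_I2)
        fix t :: 'a assume "t \<in> space lborel"
        have ne: "norm (X i - y) > 0" using X by auto
        have "gauss_kernel r t * \<bar>R (X i) t\<bar> \<le> gauss_kernel r t * (2 * L * norm (X i - y))"
          using Rb gk_nonneg[OF r] by (intro mult_left_mono) auto
        then show "norm (gauss_kernel r t * \<bar>R (X i) t\<bar> / norm (X i - y)) \<le> 2 * L * gauss_kernel r t"
          using ne gk_nonneg[OF r, of t] by (simp add: abs_mult field_simps)
      qed
    qed
    then show "(\<Phi> \<circ> X) \<longlonglongrightarrow> 0" unfolding \<Phi>_def o_def by simp
  qed
  have "((\<lambda>z. norm (gauss_smooth r f z - gauss_smooth r f y - V \<bullet> (z - y)) / norm (z - y)) \<longlongrightarrow> 0) (at y)"
    by (rule Lim_null_comparison[OF always_eventually lim\<Phi>]) (use le in auto)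
  then show ?thesis unfolding V_def[symmetric] has_derivative_iff_norm
    by (simp add: bounded_linear_inner_right)
qed

lemma grad_smooth_eq:
  "gradient (gauss_smooth r f) y = (\<integral>t. gauss_kernel r t *\<^sub>R gradient f (y - t) \<partial>lborel)"
proof -
  define V where "V = (\<integral>t. gauss_kernel r t *\<^sub>R gradient f (y - t) \<partial>lborel)"
  have D: "(gauss_smooth r f has_derivative (\<lambda>h. V \<bullet> h)) (at y)"
    unfolding V_def by (rule grad_smooth_deriv)
  then have "\<exists>v. (gauss_smooth r f has_derivative (\<lambda>h. v \<bullet> h)) (at y)" by blast
  then have S: "(gauss_smooth r f has_derivative (\<lambda>h. gradient (gauss_smooth r f) y \<bullet> h)) (at y)"
    unfolding gradient_def by (rule someI_ex)
  have "(\<lambda>h. gradient (gauss_smooth r f) y \<bullet> h) = (\<lambda>h. V \<bullet> h)"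
    by (rule has_derivative_unique[OF S D])
  then have "gradient (gauss_smooth r f) y \<bullet> (gradient (gauss_smooth r f) y - V) = V \<bullet> (gradient (gauss_smooth r f) y - V)"
    by metis
  then have "(gradient (gauss_smooth r f) y - V) \<bullet> (gradient (gauss_smooth r f) y - V) = 0"
    by (simp add: inner_diff_left)
  then show ?thesis unfolding V_def[symmetric] by simp
qed

end

definition Phi :: "real \<Rightarrow> real \<Rightarrow> real" where
  "Phi r t = exp (t / r\<^sup>2) * chi r t"

lemma chi_bounds: assumes "r > 0" shows "0 \<le> chi r t \<and> chi r t \<le> 1"
proof -
  have r2: "r\<^sup>2 > 0" using assms by simp
  consider "\<bar>t\<bar> \<ge> r\<^sup>2" | "\<bar>t\<bar> \<le> r\<^sup>2 / 2" | "r\<^sup>2 / 2 < \<bar>t\<bar>" "\<bar>t\<bar> < r\<^sup>2" by linarith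
  then show ?thesis
  proof cases
    case 3
    have "\<bar>t\<bar> / r\<^sup>2 < 1" "1/2 < \<bar>t\<bar> / r\<^sup>2" using 3 r2 by (auto simp: field_simps)
    moreover have "2 * \<bar>t\<bar> / r\<^sup>2 = 2 * (\<bar>t\<bar> / r\<^sup>2)" by simp
    ultimately have "0 \<le> 2 - 2 * \<bar>t\<bar> / r\<^sup>2" "2 - 2 * \<bar>t\<bar> / r\<^sup>2 \<le> 1" by linarith+
    then show ?thesis using 3 by (simp add: chi_def)
  qed (auto simp: chi_def)
qed

lemma chi_one_minus: assumes "r > 0" shows "1 - chi r t \<le> indicator {t. r\<^sup>2 / 2 < \<bar>t\<bar>} t"
proof (cases "\<bar>t\<bar> \<le> r\<^sup>2 / 2")
  case True
  have "r\<^sup>2 > 0" using assms by simp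
  then have "\<not> r\<^sup>2 \<le> \<bar>t\<bar>" using True by linarith
  then have "chi r t = 1" using True by (simp add: chi_def)
  then show ?thesis by simp
next
  case False
  then show ?thesis using chi_bounds[OF assms, of t] by (simp add: indicator_def)
qed

lemma chi_cont: "r > 0 \<Longrightarrow> chi r = (\<lambda>t. max 0 (min 1 (2 - 2 * \<bar>t\<bar> / r\<^sup>2)))"
  by (auto simp: fun_eq_iff chi_def field_simps)

lemma chi_meas[measurable]: "r > 0 \<Longrightarrow> chi r \<in> borel_measurable borel"
  by (subst chi_cont) (auto intro!: borel_measurable_continuous_onI continuous_intros)

lemma chi_neg_piece:
  assumes "r > 0" "- r\<^sup>2 \<le> t" "t \<le> - r\<^sup>2 / 2"
  shows "chi r t = 2 + 2 * t / r\<^sup>2"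
proof -
  have r2: "r\<^sup>2 > 0" using assms by simp
  have at: "\<bar>t\<bar> = - t" using assms r2 by simp
  consider "t = - r\<^sup>2" | "t = - r\<^sup>2 / 2" | "- r\<^sup>2 < t" "t < - r\<^sup>2 / 2" using assms by linarith
  then show ?thesis
  proof cases
    case 1 then show ?thesis using r2 by (simp add: chi_def)
  next
    case 2
    then have "\<not> r\<^sup>2 \<le> \<bar>t\<bar>" "\<bar>t\<bar> \<le> r\<^sup>2 / 2" using r2 at by linarith+
    moreover have "2 * t / r\<^sup>2 = -1" using 2 r2 by simp
    ultimately show ?thesis by (simp add: chi_def)
  next
    case 3 then show ?thesis using r2 at by (simp add: chi_def)
  qed
qed

lemma chi_pos_piece:
  assumes "r > 0" "r\<^sup>2 / 2 \<le> t" "t \<le> r\<^sup>2"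
  shows "chi r t = 2 - 2 * t / r\<^sup>2"
proof -
  have r2: "r\<^sup>2 > 0" using assms by simp
  have at: "\<bar>t\<bar> = t" using assms r2 by simp
  consider "t = r\<^sup>2" | "t = r\<^sup>2 / 2" | "r\<^sup>2 / 2 < t" "t < r\<^sup>2" using assms by linarith
  then show ?thesis
  proof cases
    case 1 then show ?thesis using r2 by (simp add: chi_def)
  next
    case 2
    then have "\<not> r\<^sup>2 \<le> \<bar>t\<bar>" "\<bar>t\<bar> \<le> r\<^sup>2 / 2" using r2 at by linarith+
    moreover have "2 * t / r\<^sup>2 = 1" using 2 r2 by simp
    ultimately show ?thesis by (simp add: chi_def)
  next
    case 3 then show ?thesis using r2 at by (simp add: chi_def)
  qed
qed

lemma chi_center:
  assumes "r > 0" "\<bar>t\<bar> \<le> r\<^sup>2 / 2"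
  shows "chi r t = 1"
proof -
  have r2: "r\<^sup>2 > 0" using assms by simp
  then have "\<not> r\<^sup>2 \<le> \<bar>t\<bar>" using assms by linarith
  then show ?thesis using assms by (simp add: chi_def)
qed

lemma Phi_nonneg: "r > 0 \<Longrightarrow> 0 \<le> Phi r t"
  using chi_bounds[of r t] by (simp add: Phi_def)

lemma Phi_le: assumes r: "r > 0" shows "Phi r t \<le> exp 1"
proof (cases "\<bar>t\<bar> < r\<^sup>2")
  case True
  then have "t / r\<^sup>2 \<le> 1" using r by (simp add: field_simps)
  then have "exp (t / r\<^sup>2) \<le> exp 1" by simp
  moreover have "chi r t \<le> 1" "0 \<le> chi r t" using chi_bounds[OF r] by auto
  ultimately show ?thesis unfolding Phi_def
    by (metis exp_gt_zero less_eq_real_def mult_le_one mult_mono mult.right_neutral)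
next
  case False
  then show ?thesis by (simp add: Phi_def chi_def)
qed

lemma lip_glue:
  fixes F :: "real \<Rightarrow> real"
  assumes "K-lipschitz_on A F" "K-lipschitz_on B F" "b \<in> A" "b \<in> B" "\<forall>x\<in>A. x \<le> b" "\<forall>x\<in>B. b \<le> x"
  shows "K-lipschitz_on (A \<union> B) F"
proof (rule lipschitz_onI)
  show "0 \<le> K" using lipschitz_on_nonneg[OF assms(1)] .
  fix x y assume xy: "x \<in> A \<union> B" "y \<in> A \<union> B"
  have LA: "\<And>x y. x \<in> A \<Longrightarrow> y \<in> A \<Longrightarrow> dist (F x) (F y) \<le> K * dist x y"
    using lipschitz_onD[OF assms(1)] by blast
  have LB: "\<And>x y. x \<in> B \<Longrightarrow> y \<in> B \<Longrightarrow> dist (F x) (F y) \<le> K * dist x y"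
    using lipschitz_onD[OF assms(2)] by blast
  have mix: "dist (F x) (F y) \<le> K * dist x y" if "x \<in> A" "y \<in> B" for x y
  proof -
    have "dist (F x) (F y) \<le> dist (F x) (F b) + dist (F b) (F y)" by (rule dist_triangle)
    also have "\<dots> \<le> K * dist x b + K * dist b y" using LA[OF that(1) assms(3)] LB[OF assms(4) that(2)] by simp
    also have "\<dots> = K * dist x y"
    proof -
      have "x \<le> b" "b \<le> y" using that assms(5,6) by auto
      then have "dist x b + dist b y = dist x y" by (simp add: dist_real_def)
      then show ?thesis by (simp add: distrib_left[symmetric])
    qed
    finally show ?thesis .
  qed
  show "dist (F x) (F y) \<le> K * dist x y"
    using xy LA LB mix[of x y] mix[of y x] by (auto simp: dist_commute)
qed

lemma lip_piece:
  fixes F g g' :: "real \<Rightarrow> real"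
  assumes der: "\<And>x. (g has_real_derivative g' x) (at x)"
    and bd: "\<And>x. a \<le> x \<Longrightarrow> x \<le> b \<Longrightarrow> \<bar>g' x\<bar> \<le> K"
    and eq: "\<And>x. a \<le> x \<Longrightarrow> x \<le> b \<Longrightarrow> F x = g x"
    and K: "0 \<le> K"
  shows "K-lipschitz_on {a..b} F"
proof (rule lipschitz_onI[OF _ K])
  have main: "\<bar>F t - F s\<bar> \<le> K * (t - s)" if "s \<in> {a..b}" "t \<in> {a..b}" "s < t" for s t
  proof -
    obtain z where z: "s < z" "z < t" "g t - g s = (t - s) * g' z"
      using MVT2[OF \<open>s < t\<close> der] by blast
    have "\<bar>g t - g s\<bar> = (t - s) * \<bar>g' z\<bar>" using z that by (simp add: abs_mult)
    also have "\<dots> \<le> (t - s) * K" using bd[of z] z that by (intro mult_left_mono) auto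
    finally show ?thesis using eq that by (simp add: mult.commute)
  qed
  fix x y assume "x \<in> {a..b}" "y \<in> {a..b}"
  then show "dist (F x) (F y) \<le> K * dist x y"
    using main[of x y] main[of y x] by (cases x y rule: linorder_cases) (auto simp: dist_real_def abs_minus_commute)
qed

lemma aux_abs: "0 \<le> (a::real) \<Longrightarrow> 0 \<le> E \<Longrightarrow> a * E \<le> B \<Longrightarrow> \<bar>- 2 * a * E\<bar> \<le> 2 * B"
  by (simp add: abs_mult)

lemma Phi_lip:
  assumes r: "r > 0"
  shows "(2 * exp 1 / r\<^sup>2)-lipschitz_on UNIV (Phi r)"
proof -
  define \<rho> where "\<rho> = r\<^sup>2"
  have \<rho>: "\<rho> > 0" unfolding \<rho>_def using r by simp
  define K where "K = 2 * exp 1 / \<rho>"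
  have e2: "exp (1::real) \<ge> 2" using exp_ge_add_one_self[of 1] by simp
  have K0: "0 \<le> K" unfolding K_def using \<rho> by simp
  have c1: "K-lipschitz_on {..-\<rho>} (Phi r)"
    by (rule lipschitz_onI[OF _ K0]) (auto simp: Phi_def chi_def \<rho>_def intro!: mult_nonneg_nonneg K0)
  have c5: "K-lipschitz_on {\<rho>..} (Phi r)"
    by (rule lipschitz_onI[OF _ K0]) (auto simp: Phi_def chi_def \<rho>_def intro!: mult_nonneg_nonneg K0)
  have c2: "K-lipschitz_on {-\<rho>..-\<rho>/2} (Phi r)"
  proof (rule lip_piece[where g="\<lambda>t. exp (t/\<rho>) * (2 + 2*t/\<rho>)" and g'="\<lambda>t. exp (t/\<rho>) * (4 + 2*t/\<rho>) / \<rho>"])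
    show "((\<lambda>t. exp (t/\<rho>) * (2 + 2*t/\<rho>)) has_real_derivative exp (x/\<rho>) * (4 + 2*x/\<rho>) / \<rho>) (at x)" for x
      using \<rho> by (auto intro!: derivative_eq_intros simp: field_simps)
    show "\<bar>exp (x/\<rho>) * (4 + 2*x/\<rho>) / \<rho>\<bar> \<le> K" if "-\<rho> \<le> x" "x \<le> -\<rho>/2" for x
    proof -
      have a: "exp (x/\<rho>) \<le> 1" using that \<rho> by (simp add: divide_nonpos_pos)
      have b: "0 \<le> 4 + 2*x/\<rho>" "4 + 2*x/\<rho> \<le> 3" using that \<rho> by (auto simp: field_simps)
      have "exp (x/\<rho>) * (4 + 2*x/\<rho>) \<le> 1 * 3" using a b by (intro mult_mono) auto
      then have "\<bar>exp (x/\<rho>) * (4 + 2*x/\<rho>)\<bar> \<le> 2 * exp 1" using b e2 by (simp add: abs_mult)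
      then show ?thesis unfolding K_def using \<rho> by (simp add: divide_right_mono)
    qed
    show "Phi r x = exp (x/\<rho>) * (2 + 2*x/\<rho>)" if "-\<rho> \<le> x" "x \<le> -\<rho>/2" for x
      using that \<rho> chi_neg_piece[OF r, of x] unfolding Phi_def \<rho>_def by simp
  qed (rule K0)
  have c3: "K-lipschitz_on {-\<rho>/2..\<rho>/2} (Phi r)"
  proof (rule lip_piece[where g="\<lambda>t. exp (t/\<rho>)" and g'="\<lambda>t. exp (t/\<rho>) / \<rho>"])
    show "((\<lambda>t. exp (t/\<rho>)) has_real_derivative exp (x/\<rho>) / \<rho>) (at x)" for x
      using \<rho> by (auto intro!: derivative_eq_intros simp: field_simps)
    show "\<bar>exp (x/\<rho>) / \<rho>\<bar> \<le> K" if "-\<rho>/2 \<le> x" "x \<le> \<rho>/2" for x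
    proof -
      have "x / \<rho> \<le> 1" using that \<rho> by (simp add: field_simps)
      then have "exp (x/\<rho>) \<le> exp 1" by simp
      then have "exp (x/\<rho>) \<le> 2 * exp 1" using exp_gt_zero[of 1] by linarith
      then show ?thesis unfolding K_def using \<rho> by (simp add: divide_right_mono)
    qed
    show "Phi r x = exp (x/\<rho>)" if "-\<rho>/2 \<le> x" "x \<le> \<rho>/2" for x
      using that \<rho> chi_center[OF r, of x] unfolding Phi_def \<rho>_def by simp
  qed (rule K0)
  have c4: "K-lipschitz_on {\<rho>/2..\<rho>} (Phi r)"
  proof (rule lip_piece[where g="\<lambda>t. exp (t/\<rho>) * (2 - 2*t/\<rho>)" and g'="\<lambda>t. - 2 * (t / \<rho>) * exp (t/\<rho>) / \<rho>"])
    show "((\<lambda>t. exp (t/\<rho>) * (2 - 2*t/\<rho>)) has_real_derivative - 2 * (x / \<rho>) * exp (x/\<rho>) / \<rho>) (at x)" for x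
      using \<rho> by (auto intro!: derivative_eq_intros simp: field_simps)
    show "\<bar>- 2 * (x / \<rho>) * exp (x/\<rho>) / \<rho>\<bar> \<le> K" if "\<rho>/2 \<le> x" "x \<le> \<rho>" for x
    proof -
      have a: "exp (x/\<rho>) \<le> exp 1" using that \<rho> by simp
      have b: "0 \<le> x / \<rho>" "x / \<rho> \<le> 1" using that \<rho> by (auto simp: field_simps)
      have "(x / \<rho>) * exp (x/\<rho>) \<le> 1 * exp 1" using a b by (intro mult_mono) auto
      then have "\<bar>- 2 * (x / \<rho>) * exp (x/\<rho>)\<bar> \<le> 2 * exp 1" using b aux_abs[of "x/\<rho>" "exp (x/\<rho>)" "exp 1"] by simp
      then show ?thesis unfolding K_def using \<rho> by (metis abs_divide abs_of_pos divide_right_mono less_eq_real_def)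
    qed
    show "Phi r x = exp (x/\<rho>) * (2 - 2*x/\<rho>)" if "\<rho>/2 \<le> x" "x \<le> \<rho>" for x
      using that \<rho> chi_pos_piece[OF r, of x] unfolding Phi_def \<rho>_def by simp
  qed (rule K0)
  have "K-lipschitz_on ((({..-\<rho>} \<union> {-\<rho>..-\<rho>/2}) \<union> {-\<rho>/2..\<rho>/2}) \<union> {\<rho>/2..\<rho>} \<union> {\<rho>..}) (Phi r)"
    using \<rho>
    by (intro lip_glue[where b="\<rho>"] lip_glue[where b="\<rho>/2"] lip_glue[where b="-\<rho>/2"] lip_glue[where b="-\<rho>"] c1 c2 c3 c4 c5) auto
  moreover have "(({..-\<rho>} \<union> {-\<rho>..-\<rho>/2}) \<union> {-\<rho>/2..\<rho>/2}) \<union> {\<rho>/2..\<rho>} \<union> {\<rho>..} = UNIV"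
    using \<rho> by auto
  ultimately show ?thesis unfolding K_def \<rho>_def by simp
qed

lemma ratio_eq:
  fixes x z c :: "'a::euclidean_space"
  assumes r: "r > 0"
  shows "gauss_kernel r (z - x) / gauss_kernel r (c - x)
       = exp ((x - c) \<bullet> (z - c) / r\<^sup>2) * exp (- (norm (z - c))\<^sup>2 / (2 * r\<^sup>2))"
proof -
  define C where "C = (sqrt (2 * pi) * r) powr (- real DIM('a))"
  have C: "C > 0" unfolding C_def using r by simp
  have n1: "(norm (z - x))\<^sup>2 = (norm (z - c))\<^sup>2 - 2 * ((x - c) \<bullet> (z - c)) + (norm (x - c))\<^sup>2"
  proof -
    have "z - x = (z - c) - (x - c)" by simp
    then have "(norm (z - x))\<^sup>2 = (norm ((z - c) - (x - c)))\<^sup>2" by metis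
    also have "\<dots> = (norm (z - c))\<^sup>2 - 2 * ((x - c) \<bullet> (z - c)) + (norm (x - c))\<^sup>2"
      by (simp add: power2_norm_eq_inner inner_diff_left inner_diff_right inner_commute)
    finally show ?thesis .
  qed
  have n2: "norm (c - x) = norm (x - c)" by (rule norm_minus_commute)
  have "gauss_kernel r (z - x) / gauss_kernel r (c - x)
      = exp (- (norm (z - x))\<^sup>2 / (2 * r\<^sup>2)) / exp (- (norm (c - x))\<^sup>2 / (2 * r\<^sup>2))"
    unfolding gauss_kernel_def C_def[symmetric] using C by simp
  also have "\<dots> = exp (- (norm (z - x))\<^sup>2 / (2 * r\<^sup>2) - (- (norm (c - x))\<^sup>2 / (2 * r\<^sup>2)))"
    by (rule exp_diff[symmetric])
  also have "- (norm (z - x))\<^sup>2 / (2 * r\<^sup>2) - (- (norm (c - x))\<^sup>2 / (2 * r\<^sup>2))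
      = (x - c) \<bullet> (z - c) / r\<^sup>2 + (- (norm (z - c))\<^sup>2 / (2 * r\<^sup>2))"
    unfolding n1 n2 using r by (simp add: field_simps)
  finally show ?thesis by (simp add: mult_exp_exp)
qed

lemma ell_eq:
  fixes x z c :: "'a::euclidean_space"
  assumes r: "r > 0"
  shows "ell f c r \<eta> x z = ((if norm (x - c) \<le> (sqrt (real DIM('a)) + 1 / \<eta>) * r then 1 else 0)
      * Phi r ((x - c) \<bullet> (z - c)) * exp (- (norm (z - c))\<^sup>2 / (2 * r\<^sup>2))) *\<^sub>R gradient f x"
  unfolding ell_def ratio_eq[OF r] Phi_def by (simp add: mult_ac)

lemma exp_lip_nonpos:
  fixes a b :: real
  assumes "a \<le> 0" "b \<le> 0"
  shows "\<bar>exp a - exp b\<bar> \<le> \<bar>a - b\<bar>"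
proof -
  have main: "exp t - exp s \<le> t - s" if "s \<le> t" "t \<le> 0" for s t :: real
  proof -
    have "1 + (s - t) \<le> exp (s - t)" by (rule exp_ge_add_one_self)
    then have "1 - exp (s - t) \<le> t - s" by linarith
    moreover have "0 \<le> 1 - exp (s - t)" using that by simp
    ultimately have "0 \<le> 1 - exp (s - t)" "1 - exp (s - t) \<le> t - s" by auto
    moreover have "exp t \<le> 1" "0 \<le> exp t" using that by auto
    ultimately have "exp t * (1 - exp (s - t)) \<le> 1 * (t - s)"
      by (intro mult_mono) auto
    moreover have "exp t * (1 - exp (s - t)) = exp t - exp s"
      by (simp add: algebra_simps exp_diff)
    ultimately show ?thesis by simp
  qed
  show ?thesis
  proof (cases "a \<le> b")
    case True
    then show ?thesis using main[of a b] assms by simp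
  next
    case False
    then show ?thesis using main[of b a] assms by simp
  qed
qed

context
  fixes f :: "'a::euclidean_space \<Rightarrow> real" and c y :: 'a and r \<eta> L :: real
  assumes dif: "f differentiable_on UNIV"
    and lip: "L-lipschitz_on UNIV f"
    and r: "r > 0" and \<eta>0: "0 < \<eta>" and \<eta>1: "\<eta> < 1"
    and yc: "norm (y - c) \<le> \<eta> / 4 * r"
begin

lemma grad_le': "norm (gradient f x) \<le> L"
  using gradient_norm_le[of f x L] dif lip by (simp add: differentiable_on_def)

lemma L0': "0 \<le> L" using lipschitz_on_nonneg[OF lip] .

lemma part2: "norm (ell f c r \<eta> x y) \<le> 3 * L"
proof -
  define I where "I = (if norm (x - c) \<le> (sqrt (real DIM('a)) + 1 / \<eta>) * r then 1 else (0::real))"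
  define Q where "Q = exp (- (norm (y - c))\<^sup>2 / (2 * r\<^sup>2))"
  have I: "0 \<le> I" "I \<le> 1" unfolding I_def by auto
  have Q: "0 \<le> Q" "Q \<le> 1" unfolding Q_def by auto
  have P: "0 \<le> Phi r ((x - c) \<bullet> (y - c))" "Phi r ((x - c) \<bullet> (y - c)) \<le> 3"
    using Phi_nonneg[OF r] Phi_le[OF r] exp_le by (auto intro: order_trans)
  have "I * Phi r ((x - c) \<bullet> (y - c)) \<le> 1 * 3"
    using I P by (intro mult_mono) auto
  then have "I * Phi r ((x - c) \<bullet> (y - c)) * Q \<le> 3 * 1"
    using I P Q by (intro mult_mono) auto
  moreover have "0 \<le> I * Phi r ((x - c) \<bullet> (y - c)) * Q" using I P Q by simp
  ultimately have "\<bar>I * Phi r ((x - c) \<bullet> (y - c)) * Q\<bar> \<le> 1 * 3 * 1" by simp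
  moreover have "norm (ell f c r \<eta> x y) = \<bar>I * Phi r ((x - c) \<bullet> (y - c)) * Q\<bar> * norm (gradient f x)"
    unfolding ell_eq[OF r] I_def Q_def by simp
  ultimately show ?thesis using grad_le'[of x] L0'
    by (metis (no_types, opaque_lifting) abs_ge_zero mult.right_neutral mult.commute mult_mono norm_ge_zero)
qed

lemma const_bound:
  fixes k :: real
  assumes k: "1 \<le> k"
  shows "exp 1 * (2 * k + 2 / \<eta> + \<eta> / 4 + 1 / 2) \<le> 20 * k / \<eta>"
proof -
  have a: "exp 1 * (2 * k + 2 / \<eta> + \<eta> / 4 + 1 / 2) \<le> 3 * (2 * k + 2 / \<eta> + \<eta> / 4 + 1 / 2)"
    using exp_le \<eta>0 k by (intro mult_right_mono) auto
  have "\<eta> * (3 * (2 * k + 2 / \<eta> + \<eta> / 4 + 1 / 2)) = 6 * (k * \<eta>) + 6 + 3 * (\<eta> * \<eta>) / 4 + 3 * \<eta> / 2"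
    using \<eta>0 by (simp add: field_simps)
  also have "\<dots> \<le> 20 * k"
  proof -
    have "k * \<eta> \<le> k" using k \<eta>1 \<eta>0 by (simp add: mult_left_le)
    moreover have "\<eta> * \<eta> \<le> 1" using \<eta>0 \<eta>1 by (simp add: mult_le_one)
    ultimately show ?thesis using k \<eta>1 by linarith
  qed
  finally have "3 * (2 * k + 2 / \<eta> + \<eta> / 4 + 1 / 2) \<le> 20 * k / \<eta>"
    using \<eta>0 by (simp add: field_simps)
  with a show ?thesis by linarith
qed

lemma part3:
  assumes D: "((\<lambda>z. ell f c r \<eta> x z) has_derivative D) (at y)"
  shows "onorm D \<le> 20 * L * sqrt (real DIM('a)) / (r * \<eta>)"
proof -
  define B where "B = 20 * L * sqrt (real DIM('a)) / (r * \<eta>)"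
  have B0: "0 \<le> B" unfolding B_def using L0' r \<eta>0 by simp
  define I where "I = (if norm (x - c) \<le> (sqrt (real DIM('a)) + 1 / \<eta>) * r then 1 else (0::real))"
  define Q where "Q = (\<lambda>z. exp (- (norm (z - c))\<^sup>2 / (2 * r\<^sup>2)))"
  define u where "u = x - c"
  define \<phi> where "\<phi> = (\<lambda>z. I * Phi r (u \<bullet> (z - c)) * Q z)"
  have ellphi: "ell f c r \<eta> x z = \<phi> z *\<^sub>R gradient f x" for z
    unfolding ell_eq[OF r] \<phi>_def I_def Q_def u_def by simp
  have loc: "norm (ell f c r \<eta> x z - ell f c r \<eta> x y) \<le> B * norm (z - y)" if zy: "norm (z - y) < r" for z
  proof (cases "I = 0")
    case True
    then show ?thesis using B0 unfolding ellphi \<phi>_def by simp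
  next
    case False
    then have I1: "I = 1" and un: "norm u \<le> (sqrt (real DIM('a)) + 1 / \<eta>) * r"
      unfolding I_def u_def by (auto split: if_splits)
    define K where "K = 2 * exp 1 / r\<^sup>2"
    have PL: "\<bar>Phi r s - Phi r t\<bar> \<le> K * \<bar>s - t\<bar>" for s t
      using lipschitz_on_normD[OF Phi_lip[OF r], of s t] unfolding K_def by simp
    have Q01: "0 \<le> Q z" "Q z \<le> 1" for z unfolding Q_def by auto
    have T: "\<bar>u \<bullet> (z - c) - u \<bullet> (y - c)\<bar> \<le> norm u * norm (z - y)"
    proof -
      have "u \<bullet> (z - c) - u \<bullet> (y - c) = u \<bullet> (z - y)" by (simp add: inner_diff_right)
      then show ?thesis using Cauchy_Schwarz_ineq2[of u "z - y"] by simp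
    qed
    have QL: "\<bar>Q z - Q y\<bar> \<le> (\<eta> * r / 2 + r) / (2 * r\<^sup>2) * norm (z - y)"
    proof -
      have "\<bar>Q z - Q y\<bar> \<le> \<bar>(- (norm (z - c))\<^sup>2 / (2 * r\<^sup>2)) - (- (norm (y - c))\<^sup>2 / (2 * r\<^sup>2))\<bar>"
        unfolding Q_def by (rule exp_lip_nonpos) auto
      also have "\<dots> = \<bar>(norm (z - c))\<^sup>2 - (norm (y - c))\<^sup>2\<bar> / (2 * r\<^sup>2)"
        using r by (simp add: field_simps abs_divide)
      also have "\<bar>(norm (z - c))\<^sup>2 - (norm (y - c))\<^sup>2\<bar> \<le> norm (z - y) * (\<eta> * r / 2 + r)"
      proof -
        have e: "(norm (z - c))\<^sup>2 - (norm (y - c))\<^sup>2 = (norm (z - c) - norm (y - c)) * (norm (z - c) + norm (y - c))"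
          by (simp add: power2_eq_square algebra_simps)
        have d: "\<bar>norm (z - c) - norm (y - c)\<bar> \<le> norm (z - y)"
          using norm_triangle_ineq3[of "z - c" "y - c"] by simp
        have s: "norm (z - c) + norm (y - c) \<le> \<eta> * r / 2 + r"
        proof -
          have "norm (z - c) \<le> norm (z - y) + norm (y - c)" using norm_triangle_ineq[of "z - y" "y - c"] by simp
          then show ?thesis using zy yc by simp
        qed
        have "\<bar>(norm (z - c))\<^sup>2 - (norm (y - c))\<^sup>2\<bar> = \<bar>norm (z - c) - norm (y - c)\<bar> * (norm (z - c) + norm (y - c))"
          unfolding e by (simp add: abs_mult)
        also have "\<dots> \<le> norm (z - y) * (\<eta> * r / 2 + r)"
          using d s by (intro mult_mono) auto
        finally show ?thesis .
      qed
      then have "\<bar>(norm (z - c))\<^sup>2 - (norm (y - c))\<^sup>2\<bar> / (2 * r\<^sup>2) \<le> norm (z - y) * (\<eta> * r / 2 + r) / (2 * r\<^sup>2)"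
        using r by (intro divide_right_mono) auto
      finally show ?thesis by (metis mult.commute times_divide_eq_left)
    qed
    have "\<bar>\<phi> z - \<phi> y\<bar> = \<bar>(Phi r (u \<bullet> (z - c)) - Phi r (u \<bullet> (y - c))) * Q z + Phi r (u \<bullet> (y - c)) * (Q z - Q y)\<bar>"
      unfolding \<phi>_def I1 by (simp add: algebra_simps)
    also have "\<dots> \<le> \<bar>Phi r (u \<bullet> (z - c)) - Phi r (u \<bullet> (y - c))\<bar> * Q z + Phi r (u \<bullet> (y - c)) * \<bar>Q z - Q y\<bar>"
      using Q01[of z] Phi_nonneg[OF r] by (simp add: abs_mult abs_triangle_ineq[THEN order_trans])
    also have "\<dots> \<le> (K * (norm u * norm (z - y))) * 1 + exp 1 * ((\<eta> * r / 2 + r) / (2 * r\<^sup>2) * norm (z - y))"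
    proof (intro add_mono mult_mono)
      show "\<bar>Phi r (u \<bullet> (z - c)) - Phi r (u \<bullet> (y - c))\<bar> \<le> K * (norm u * norm (z - y))"
        using PL T unfolding K_def using r by (meson order_trans mult_left_mono divide_nonneg_pos exp_ge_zero mult_nonneg_nonneg zero_le_numeral zero_less_power)
    qed (use Q01 Phi_le[OF r] QL Phi_nonneg[OF r] r in \<open>auto simp: K_def\<close>)
    also have "\<dots> = (K * norm u + exp 1 * (\<eta> * r / 2 + r) / (2 * r\<^sup>2)) * norm (z - y)"
      by (simp add: algebra_simps)
    also have "\<dots> \<le> (exp 1 * (2 * sqrt (real DIM('a)) + 2 / \<eta> + \<eta> / 4 + 1 / 2) / r) * norm (z - y)"
    proof (intro mult_right_mono)
      have "K * norm u \<le> K * ((sqrt (real DIM('a)) + 1 / \<eta>) * r)"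
        using un unfolding K_def using r by (intro mult_left_mono) auto
      also have "\<dots> = exp 1 * (2 * sqrt (real DIM('a)) + 2 / \<eta>) / r"
        unfolding K_def using r \<eta>0 by (simp add: field_simps power2_eq_square)
      finally have a: "K * norm u \<le> exp 1 * (2 * sqrt (real DIM('a)) + 2 / \<eta>) / r" .
      have b: "exp 1 * (\<eta> * r / 2 + r) / (2 * r\<^sup>2) = exp 1 * (\<eta> / 4 + 1 / 2) / r"
        using r by (simp add: field_simps power2_eq_square)
      have c: "exp 1 * (2 * sqrt (real DIM('a)) + 2 / \<eta> + \<eta> / 4 + 1 / 2) / r
          = exp 1 * (2 * sqrt (real DIM('a)) + 2 / \<eta>) / r + exp 1 * (\<eta> / 4 + 1 / 2) / r"
        using r \<eta>0 by (simp add: field_simps)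
      show "K * norm u + exp 1 * (\<eta> * r / 2 + r) / (2 * r\<^sup>2) \<le> exp 1 * (2 * sqrt (real DIM('a)) + 2 / \<eta> + \<eta> / 4 + 1 / 2) / r"
        using a b c by linarith
    qed simp
    also have "\<dots> \<le> (20 * sqrt (real DIM('a)) / \<eta> / r) * norm (z - y)"
      using const_bound[of "sqrt (real DIM('a))"] r by (intro mult_right_mono divide_right_mono) auto
    finally have ph: "\<bar>\<phi> z - \<phi> y\<bar> \<le> 20 * sqrt (real DIM('a)) / \<eta> / r * norm (z - y)" .
    have "norm (ell f c r \<eta> x z - ell f c r \<eta> x y) = \<bar>\<phi> z - \<phi> y\<bar> * norm (gradient f x)"
      unfolding ellphi by (simp add: scaleR_diff_left[symmetric])
    also have "\<dots> \<le> (20 * sqrt (real DIM('a)) / \<eta> / r * norm (z - y)) * L"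
      using ph grad_le'[of x] by (intro mult_mono) auto
    also have "\<dots> = B * norm (z - y)" unfolding B_def using r \<eta>0 by (simp add: field_simps)
    finally show ?thesis .
  qed
  have ev: "eventually (\<lambda>z. norm (ell f c r \<eta> x z - ell f c r \<eta> x y) \<le> B * norm (z - y)) (at y)"
    unfolding eventually_at using r loc by (intro exI[of _ r]) (auto simp: dist_norm)
  show ?thesis unfolding B_def[symmetric]
    by (rule onorm_le) (rule deriv_norm_bound_local[OF D ev])
qed

end

lemma tail_real:
  fixes J :: "'a::euclidean_space \<Rightarrow> real"
  assumes r: "r > 0" and Jm[measurable]: "J \<in> borel_measurable borel"
    and J0: "\<And>x. 0 \<le> J x" and J1: "\<And>x. J x \<le> 1"
    and bd: "(\<integral>\<^sup>+x. ennreal (gauss_kernel r x * J x) \<partial>lborel) \<le> ennreal \<beta>" and \<beta>: "0 \<le> \<beta>"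
  shows "(\<integral>x. gauss_kernel r (y - x) * J (x - y) \<partial>lborel) \<le> \<beta>"
proof -
  have "(\<integral>x. gauss_kernel r (y - x) * J (x - y) \<partial>lborel)
      = enn2real (\<integral>\<^sup>+x. ennreal (gauss_kernel r (y - x) * J (x - y)) \<partial>lborel)"
    by (rule integral_eq_nn_integral) (auto simp: gk_nonneg[OF r] J0)
  also have "(\<integral>\<^sup>+x. ennreal (gauss_kernel r (y - x) * J (x - y)) \<partial>lborel)
      = (\<integral>\<^sup>+x. ennreal (gauss_kernel r (x - y) * J (x - y)) \<partial>lborel)"
    by (metis gk_minus minus_diff_eq)
  also have "\<dots> = (\<integral>\<^sup>+x. ennreal (gauss_kernel r x * J x) \<partial>lborel)"
    by (rule nn_integral_translate[where F="\<lambda>z. ennreal (gauss_kernel r z * J z)"]) measurable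
  finally show ?thesis using bd \<beta> by (simp add: enn2real_leI)
qed

lemma gk_reflect_integrable:
  assumes r: "r > 0"
  shows "integrable lborel (\<lambda>x. gauss_kernel r (y - x :: 'a::euclidean_space))"
  using integrable_reflect[of "gauss_kernel r" y] gk_integrable[OF r] by simp

context
  fixes f :: "'a::euclidean_space \<Rightarrow> real" and c y :: 'a and r \<eta> L :: real
  assumes dif: "f differentiable_on UNIV"
    and lip: "L-lipschitz_on UNIV f"
    and r: "r > 0" and \<eta>0: "0 < \<eta>" and \<eta>1: "\<eta> < 1"
    and yc: "norm (y - c) \<le> \<eta> / 4 * r"
begin

lemma chim[measurable]: "chi r \<in> borel_measurable borel" using chi_meas[OF r] .

lemma gradm[measurable]: "gradient f \<in> borel_measurable borel" by (rule gradient_measurable[OF dif])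

lemma gle: "norm (gradient f x) \<le> L"
  using gradient_norm_le[of f x L] dif lip by (simp add: differentiable_on_def)

lemma Lnn: "0 \<le> L" using lipschitz_on_nonneg[OF lip] .

definition "wfun x = chi r ((x - c) \<bullet> (y - c)) * (if norm (x - c) \<le> (sqrt (real DIM('a)) + 1 / \<eta>) * r then 1 else (0::real))"

lemma wfun_m[measurable]: "wfun \<in> borel_measurable borel"
  unfolding wfun_def[abs_def] by measurable

lemma wfun_bounds: "0 \<le> wfun x" "wfun x \<le> 1"
  using chi_bounds[OF r, of "(x - c) \<bullet> (y - c)"] unfolding wfun_def by auto

lemma ell_x: "ell f c r \<eta> x y = (gauss_kernel r (y - x) / gauss_kernel r (c - x) * wfun x) *\<^sub>R gradient f x"
  unfolding ell_def wfun_def by (simp add: mult_ac)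

lemma ell_meas: "(\<lambda>x. ell f c r \<eta> x y) \<in> borel_measurable borel"
  unfolding ell_x by measurable

lemma lhs_eq: "(\<integral>x. ell f c r \<eta> x y \<partial>gauss_measure c r) = (\<integral>x. (gauss_kernel r (y - x) * wfun x) *\<^sub>R gradient f x \<partial>lborel)"
proof -
  have "(\<integral>x. ell f c r \<eta> x y \<partial>gauss_measure c r) = (\<integral>x. gauss_kernel r (x - c) *\<^sub>R ell f c r \<eta> x y \<partial>lborel)"
    unfolding gauss_measure_def using ell_meas
    by (subst integral_density) (auto simp: gk_nonneg[OF r])
  also have "\<dots> = (\<integral>x. (gauss_kernel r (y - x) * wfun x) *\<^sub>R gradient f x \<partial>lborel)"
  proof (intro Bochner_Integration.integral_cong refl)
    fix x :: 'a
    have e: "gauss_kernel r (x - c) = gauss_kernel r (c - x)" by (metis gk_minus minus_diff_eq)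
    have p: "gauss_kernel r (c - x) > 0" by (rule gk_pos[OF r])
    show "gauss_kernel r (x - c) *\<^sub>R ell f c r \<eta> x y = (gauss_kernel r (y - x) * wfun x) *\<^sub>R gradient f x"
      unfolding ell_x e using p by simp
  qed
  finally show ?thesis .
qed

lemma rhs_eq: "gradient (gauss_smooth r f) y = (\<integral>x. gauss_kernel r (y - x) *\<^sub>R gradient f x \<partial>lborel)"
proof -
  have "gradient (gauss_smooth r f) y = (\<integral>t. gauss_kernel r t *\<^sub>R gradient f (y - t) \<partial>lborel)"
    by (rule grad_smooth_eq[OF dif lip r])
  also have "\<dots> = (\<integral>x. gauss_kernel r (y - x) *\<^sub>R gradient f x \<partial>lborel)"
    using integral_reflect[of "\<lambda>x. gauss_kernel r (y - x) *\<^sub>R gradient f x" y] by simp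
  finally show ?thesis .
qed

lemma int_bd:
  assumes m: "(\<lambda>x. h x) \<in> borel_measurable borel" and hb: "\<And>x. \<bar>h x\<bar> \<le> 1"
  shows "integrable lborel (\<lambda>x. (gauss_kernel r (y - x) * h x) *\<^sub>R gradient f x)"
proof (rule Bochner_Integration.integrable_bound[OF integrable_mult_right[OF gk_reflect_integrable[OF r, of y], of L]])
  show "(\<lambda>x. (gauss_kernel r (y - x) * h x) *\<^sub>R gradient f x) \<in> borel_measurable lborel" using m by measurable
  show "AE x in lborel. norm ((gauss_kernel r (y - x) * h x) *\<^sub>R gradient f x) \<le> norm (L * gauss_kernel r (y - x))"
  proof (rule AE_I2)
    fix x :: 'a assume "x \<in> space lborel"
    have g: "0 \<le> gauss_kernel r (y - x)" by (rule gk_nonneg[OF r])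
    have "\<bar>h x\<bar> * norm (gradient f x) \<le> 1 * L" using hb gle by (intro mult_mono) auto
    then have "gauss_kernel r (y - x) * (\<bar>h x\<bar> * norm (gradient f x)) \<le> gauss_kernel r (y - x) * L"
      using g by (intro mult_left_mono) auto
    then show "norm ((gauss_kernel r (y - x) * h x) *\<^sub>R gradient f x) \<le> norm (L * gauss_kernel r (y - x))"
      using g Lnn by (simp add: abs_mult mult_ac)
  qed
qed


lemma pointwise_w:
  defines "v \<equiv> y - c"
  defines "a \<equiv> r\<^sup>2 / 2 - (norm v)\<^sup>2"
  defines "s \<equiv> sqrt (real DIM('a)) + (1 / \<eta> - \<eta> / 4)"
  shows "1 - wfun x \<le> indicator {z. s * r < norm z} (x - y) + indicator {z. a < v \<bullet> z} (x - y)
                       + indicator {z. a < (- v) \<bullet> z} (x - y)"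
proof -
  define T where "T = (x - c) \<bullet> v"
  define I where "I = (if norm (x - c) \<le> (sqrt (real DIM('a)) + 1 / \<eta>) * r then 1 else (0::real))"
  have w: "wfun x = chi r T * I" unfolding wfun_def T_def I_def v_def by simp
  have ch: "0 \<le> chi r T" "chi r T \<le> 1" using chi_bounds[OF r] by auto
  have I01: "0 \<le> I" "I \<le> 1" unfolding I_def by auto
  have "0 \<le> (1 - chi r T) * (1 - I)" using ch I01 by simp
  then have split: "1 - wfun x \<le> (1 - chi r T) + (1 - I)" unfolding w by (simp add: algebra_simps)
  have Tv: "T = v \<bullet> (x - y) + (norm v)\<^sup>2"
  proof -
    have xc: "x - c = (x - y) + v" unfolding v_def by simp
    show ?thesis unfolding T_def xc by (simp only: inner_add_left inner_commute[of "x - y" v] power2_norm_eq_inner)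
  qed
  have A: "1 - chi r T \<le> indicator {z. a < v \<bullet> z} (x - y) + indicator {z. a < (- v) \<bullet> z} (x - y)"
  proof (cases "r\<^sup>2 / 2 < \<bar>T\<bar>")
    case True
    have nv: "0 \<le> (norm v)\<^sup>2" by simp
    show ?thesis
    proof (cases "T > 0")
      case True
      then have "a < v \<bullet> (x - y)" using \<open>r\<^sup>2 / 2 < \<bar>T\<bar>\<close> Tv unfolding a_def by simp
      then show ?thesis using ch by (simp add: indicator_def)
    next
      case False
      then have "\<bar>T\<bar> = - T" by simp
      then have "T < - (r\<^sup>2 / 2)" using \<open>r\<^sup>2 / 2 < \<bar>T\<bar>\<close> by linarith
      moreover have "(- v) \<bullet> (x - y) = - (v \<bullet> (x - y))" by simp
      ultimately have "a < (- v) \<bullet> (x - y)" using Tv nv unfolding a_def by linarith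
      then show ?thesis using ch by (simp add: indicator_def)
    qed
  next
    case False
    then have "1 - chi r T \<le> 0" using chi_one_minus[OF r, of T] by (simp add: indicator_def)
    then show ?thesis by (simp add: indicator_def)
  qed
  have B: "1 - I \<le> indicator {z. s * r < norm z} (x - y)"
  proof (cases "norm (x - c) \<le> (sqrt (real DIM('a)) + 1 / \<eta>) * r")
    case True then show ?thesis unfolding I_def by (simp add: indicator_def)
  next
    case False
    have "norm (x - c) \<le> norm (x - y) + norm (y - c)" using norm_triangle_ineq[of "x - y" "y - c"] by simp
    then have "s * r < norm (x - y)" using False yc unfolding s_def by (simp add: algebra_simps)
    then show ?thesis using I01 by (simp add: indicator_def)
  qed
  show ?thesis using split A B by linarith
qed

lemma tail_sum_bound:
  defines "v \<equiv> y - c"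
  defines "a \<equiv> r\<^sup>2 / 2 - (norm v)\<^sup>2"
  defines "s \<equiv> sqrt (real DIM('a)) + (1 / \<eta> - \<eta> / 4)"
  shows "(\<integral>x. gauss_kernel r (y - x) * indicator {z. s * r < norm z} (x - y) \<partial>lborel) \<le> exp (- (1/\<eta> - \<eta>/4)\<^sup>2 / 2)"
    and "(\<integral>x. gauss_kernel r (y - x) * indicator {z. a < v \<bullet> z} (x - y) \<partial>lborel) \<le> exp (- (2/\<eta> - \<eta>/4)\<^sup>2 / 2)"
    and "(\<integral>x. gauss_kernel r (y - x) * indicator {z. a < (- v) \<bullet> z} (x - y) \<partial>lborel) \<le> exp (- (2/\<eta> - \<eta>/4)\<^sup>2 / 2)"
proof -
  have t0: "0 < 1 / \<eta> - \<eta> / 4"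
  proof -
    have "1 < 1 / \<eta>" using \<eta>0 \<eta>1 by (simp add: field_simps)
    moreover have "\<eta> / 4 < 1" using \<eta>1 by simp
    ultimately show ?thesis by simp
  qed
  show "(\<integral>x. gauss_kernel r (y - x) * indicator {z. s * r < norm z} (x - y) \<partial>lborel) \<le> exp (- (1/\<eta> - \<eta>/4)\<^sup>2 / 2)"
  proof (rule tail_real[OF r])
    show "(\<integral>\<^sup>+x. ennreal (gauss_kernel r (x::'a) * indicator {z. s * r < norm z} x) \<partial>lborel) \<le> ennreal (exp (- (1/\<eta> - \<eta>/4)\<^sup>2 / 2))"
      using tail_norm[OF r, of s, where 'a='a] t0 unfolding s_def by simp
  qed (auto simp: indicator_def)
  have av: "a \<ge> r\<^sup>2 * (8 - \<eta>\<^sup>2) / 16" "r\<^sup>2 * (8 - \<eta>\<^sup>2) / 16 > 0"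
  proof -
    have "norm v \<le> \<eta> / 4 * r" using yc unfolding v_def .
    then have "(norm v)\<^sup>2 \<le> (\<eta> / 4 * r)\<^sup>2" by (intro power_mono) auto
    then show "a \<ge> r\<^sup>2 * (8 - \<eta>\<^sup>2) / 16" unfolding a_def by (simp add: power_mult_distrib power_divide field_simps)
    have "\<eta>\<^sup>2 \<le> 1" using \<eta>0 \<eta>1 by (simp add: power_le_one)
    then have "\<eta>\<^sup>2 < 8" by linarith
    then show "r\<^sup>2 * (8 - \<eta>\<^sup>2) / 16 > 0" using r by simp
  qed
  have lin: "(\<integral>x. gauss_kernel r (y - x) * indicator {z. a < w \<bullet> z} (x - y) \<partial>lborel) \<le> exp (- (2/\<eta> - \<eta>/4)\<^sup>2 / 2)"
    if wv: "norm w = norm v" for w :: 'a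
  proof (rule tail_real[OF r])
    show "(\<integral>\<^sup>+x. ennreal (gauss_kernel r (x::'a) * indicator {z. a < w \<bullet> z} x) \<partial>lborel) \<le> ennreal (exp (- (2/\<eta> - \<eta>/4)\<^sup>2 / 2))"
    proof (cases "w = 0")
      case True
      then have "{z. a < w \<bullet> z} = {}" using av by auto
      then show ?thesis by simp
    next
      case False
      have a0: "a > 0" using av by linarith
      have "(\<integral>\<^sup>+x. ennreal (gauss_kernel r (x::'a) * indicator {z. a < w \<bullet> z} x) \<partial>lborel) \<le> ennreal (exp (- a\<^sup>2 / (2 * r\<^sup>2 * (norm w)\<^sup>2)))"
        by (rule tail_lin[OF r False a0])
      also have "\<dots> \<le> ennreal (exp (- (2/\<eta> - \<eta>/4)\<^sup>2 / 2))"
      proof (rule ennreal_leI, subst exp_le_cancel_iff)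
        have nw: "norm w > 0" using False by simp
        have nw2: "norm w \<le> \<eta> / 4 * r" using wv yc unfolding v_def by simp
        have e: "(2/\<eta> - \<eta>/4)\<^sup>2 / 2 = (r\<^sup>2 * (8 - \<eta>\<^sup>2) / 16)\<^sup>2 / (2 * r\<^sup>2 * (\<eta> / 4 * r)\<^sup>2)"
          using \<eta>0 r by (simp add: power2_eq_square field_simps)
        have "(r\<^sup>2 * (8 - \<eta>\<^sup>2) / 16)\<^sup>2 / (2 * r\<^sup>2 * (\<eta> / 4 * r)\<^sup>2) \<le> a\<^sup>2 / (2 * r\<^sup>2 * (norm w)\<^sup>2)"
        proof (rule frac_le)
          show "0 \<le> a\<^sup>2" by simp
          show "(r\<^sup>2 * (8 - \<eta>\<^sup>2) / 16)\<^sup>2 \<le> a\<^sup>2" using av by (intro power_mono) auto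
          show "0 < 2 * r\<^sup>2 * (norm w)\<^sup>2" using nw r by simp
          show "2 * r\<^sup>2 * (norm w)\<^sup>2 \<le> 2 * r\<^sup>2 * (\<eta> / 4 * r)\<^sup>2"
            using nw2 nw r by (intro mult_left_mono power_mono) auto
        qed
        moreover have "- a\<^sup>2 / (2 * r\<^sup>2 * (norm w)\<^sup>2) = - (a\<^sup>2 / (2 * r\<^sup>2 * (norm w)\<^sup>2))" by simp
        moreover have "- (2/\<eta> - \<eta>/4)\<^sup>2 / 2 = - ((2/\<eta> - \<eta>/4)\<^sup>2 / 2)" by simp
        ultimately show "- a\<^sup>2 / (2 * r\<^sup>2 * (norm w)\<^sup>2) \<le> - (2/\<eta> - \<eta>/4)\<^sup>2 / 2" using e by linarith
      qed
      finally show ?thesis .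
    qed
  qed (auto simp: indicator_def)
  show "(\<integral>x. gauss_kernel r (y - x) * indicator {z. a < v \<bullet> z} (x - y) \<partial>lborel) \<le> exp (- (2/\<eta> - \<eta>/4)\<^sup>2 / 2)"
    by (rule lin) simp
  show "(\<integral>x. gauss_kernel r (y - x) * indicator {z. a < (- v) \<bullet> z} (x - y) \<partial>lborel) \<le> exp (- (2/\<eta> - \<eta>/4)\<^sup>2 / 2)"
    by (rule lin) simp
qed


lemma int_g_h:
  assumes m: "h \<in> borel_measurable borel" and hb: "\<And>x. \<bar>h x\<bar> \<le> 1"
  shows "integrable lborel (\<lambda>x. gauss_kernel r (y - x) * h x)"
proof (rule Bochner_Integration.integrable_bound[OF gk_reflect_integrable[OF r, of y]])
  show "(\<lambda>x. gauss_kernel r (y - x) * h x) \<in> borel_measurable lborel" using m by measurable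
  show "AE x in lborel. norm (gauss_kernel r (y - x) * h x) \<le> norm (gauss_kernel r (y - x))"
  proof (rule AE_I2)
    fix x :: 'a assume "x \<in> space lborel"
    have g: "0 \<le> gauss_kernel r (y - x)" by (rule gk_nonneg[OF r])
    show "norm (gauss_kernel r (y - x) * h x) \<le> norm (gauss_kernel r (y - x))"
      using g hb[of x] mult_left_mono[of "\<bar>h x\<bar>" 1 "gauss_kernel r (y - x)"] by (simp add: abs_mult)
  qed
qed

lemma part1:
  "norm ((\<integral>x. ell f c r \<eta> x y \<partial>gauss_measure c r) - gradient (gauss_smooth r f) y)
     \<le> 2 * L * exp (- 1 / (2 * \<eta>\<^sup>2))"
proof -
  define v where "v = y - c"
  define a where "a = r\<^sup>2 / 2 - (norm v)\<^sup>2"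
  define s where "s = sqrt (real DIM('a)) + (1 / \<eta> - \<eta> / 4)"
  define J where "J = (\<lambda>x. indicator {z. s * r < norm z} (x - y) + indicator {z. a < v \<bullet> z} (x - y)
                       + indicator {z. a < (- v) \<bullet> z} ((x - y) :: 'a) :: real)"
  have wb: "\<bar>wfun x - 1\<bar> \<le> 1" "\<bar>wfun x\<bar> \<le> 1" "\<bar>1 - wfun x\<bar> \<le> 1" for x using wfun_bounds[of x] by auto
  have i1: "integrable lborel (\<lambda>x. (gauss_kernel r (y - x) * wfun x) *\<^sub>R gradient f x)"
    by (rule int_bd) (auto simp: wb)
  have i2: "integrable lborel (\<lambda>x. (gauss_kernel r (y - x) * 1) *\<^sub>R gradient f x)"
    by (rule int_bd) auto
  have i3: "integrable lborel (\<lambda>x. (gauss_kernel r (y - x) * (wfun x - 1)) *\<^sub>R gradient f x)"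
    by (rule int_bd) (auto simp: wb)
  have "(\<integral>x. ell f c r \<eta> x y \<partial>gauss_measure c r) - gradient (gauss_smooth r f) y
      = (\<integral>x. (gauss_kernel r (y - x) * wfun x) *\<^sub>R gradient f x \<partial>lborel) - (\<integral>x. (gauss_kernel r (y - x) * 1) *\<^sub>R gradient f x \<partial>lborel)"
    unfolding lhs_eq rhs_eq by simp
  also have "\<dots> = (\<integral>x. (gauss_kernel r (y - x) * wfun x) *\<^sub>R gradient f x - (gauss_kernel r (y - x) * 1) *\<^sub>R gradient f x \<partial>lborel)"
    by (rule Bochner_Integration.integral_diff[OF i1 i2, symmetric])
  also have "\<dots> = (\<integral>x. (gauss_kernel r (y - x) * (wfun x - 1)) *\<^sub>R gradient f x \<partial>lborel)"
    by (intro Bochner_Integration.integral_cong refl) (simp add: algebra_simps scaleR_diff_left)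
  finally have eq: "(\<integral>x. ell f c r \<eta> x y \<partial>gauss_measure c r) - gradient (gauss_smooth r f) y = \<dots>" .
  have i4: "integrable lborel (\<lambda>x. L * (gauss_kernel r (y - x) * (1 - wfun x)))"
    using int_g_h[of "\<lambda>x. 1 - wfun x"] wb by auto
  have "norm (\<integral>x. (gauss_kernel r (y - x) * (wfun x - 1)) *\<^sub>R gradient f x \<partial>lborel)
      \<le> (\<integral>x. norm ((gauss_kernel r (y - x) * (wfun x - 1)) *\<^sub>R gradient f x) \<partial>lborel)"
    by (rule integral_norm_bound)
  also have "\<dots> \<le> (\<integral>x. L * (gauss_kernel r (y - x) * (1 - wfun x)) \<partial>lborel)"
  proof (rule integral_mono[OF integrable_norm[OF i3] i4])
    fix x :: 'a
    have g: "0 \<le> gauss_kernel r (y - x)" by (rule gk_nonneg[OF r])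
    have w: "\<bar>wfun x - 1\<bar> = 1 - wfun x" using wfun_bounds[of x] by simp
    have "gauss_kernel r (y - x) * (1 - wfun x) * norm (gradient f x) \<le> gauss_kernel r (y - x) * (1 - wfun x) * L"
      using g wfun_bounds[of x] gle by (intro mult_left_mono) auto
    then show "norm ((gauss_kernel r (y - x) * (wfun x - 1)) *\<^sub>R gradient f x) \<le> L * (gauss_kernel r (y - x) * (1 - wfun x))"
      using g by (simp add: abs_mult w mult_ac)
  qed
  also have "\<dots> = L * (\<integral>x. gauss_kernel r (y - x) * (1 - wfun x) \<partial>lborel)" by simp
  also have "\<dots> \<le> L * (exp (- (1/\<eta> - \<eta>/4)\<^sup>2 / 2) + 2 * exp (- (2/\<eta> - \<eta>/4)\<^sup>2 / 2))"
  proof (rule mult_left_mono[OF _ Lnn])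
    have ij: "integrable lborel (\<lambda>x. gauss_kernel r (y - x) * indicator S (x - y))" if "S \<in> sets borel" for S :: "'a set"
      using that by (intro int_g_h) (auto simp: indicator_def)
    have s1: "{z::'a. s * r < norm z} \<in> sets borel" by measurable
    have s2: "{z::'a. a < v \<bullet> z} \<in> sets borel" by measurable
    have s3: "{z::'a. a < (- v) \<bullet> z} \<in> sets borel" by measurable
    have "(\<integral>x. gauss_kernel r (y - x) * (1 - wfun x) \<partial>lborel)
        \<le> (\<integral>x. gauss_kernel r (y - x) * indicator {z. s * r < norm z} (x - y)
             + gauss_kernel r (y - x) * indicator {z. a < v \<bullet> z} (x - y)
             + gauss_kernel r (y - x) * indicator {z. a < (- v) \<bullet> z} (x - y) \<partial>lborel)"
    proof (rule integral_mono)
      show "integrable lborel (\<lambda>x. gauss_kernel r (y - x) * (1 - wfun x))"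
        using int_g_h[of "\<lambda>x. 1 - wfun x"] wb by auto
      show "integrable lborel (\<lambda>x. gauss_kernel r (y - x) * indicator {z. s * r < norm z} (x - y)
             + gauss_kernel r (y - x) * indicator {z. a < v \<bullet> z} (x - y)
             + gauss_kernel r (y - x) * indicator {z. a < (- v) \<bullet> z} (x - y))"
        using ij[OF s1] ij[OF s2] ij[OF s3] by auto
      fix x :: 'a
      have g: "0 \<le> gauss_kernel r (y - x)" by (rule gk_nonneg[OF r])
      show "gauss_kernel r (y - x) * (1 - wfun x) \<le> gauss_kernel r (y - x) * indicator {z. s * r < norm z} (x - y)
             + gauss_kernel r (y - x) * indicator {z. a < v \<bullet> z} (x - y)
             + gauss_kernel r (y - x) * indicator {z. a < (- v) \<bullet> z} (x - y)"
        using mult_left_mono[OF pointwise_w[of x] g] unfolding v_def a_def s_def by (simp add: distrib_left)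
    qed
    also have "\<dots> = (\<integral>x. gauss_kernel r (y - x) * indicator {z. s * r < norm z} (x - y) \<partial>lborel)
             + (\<integral>x. gauss_kernel r (y - x) * indicator {z. a < v \<bullet> z} (x - y) \<partial>lborel)
             + (\<integral>x. gauss_kernel r (y - x) * indicator {z. a < (- v) \<bullet> z} (x - y) \<partial>lborel)"
      using ij[OF s1] ij[OF s2] ij[OF s3] by (simp add: Bochner_Integration.integral_add)
    also have "\<dots> \<le> exp (- (1/\<eta> - \<eta>/4)\<^sup>2 / 2) + exp (- (2/\<eta> - \<eta>/4)\<^sup>2 / 2) + exp (- (2/\<eta> - \<eta>/4)\<^sup>2 / 2)"
      using tail_sum_bound unfolding v_def a_def s_def by (intro add_mono) auto
    finally show "(\<integral>x. gauss_kernel r (y - x) * (1 - wfun x) \<partial>lborel) \<le> exp (- (1/\<eta> - \<eta>/4)\<^sup>2 / 2) + 2 * exp (- (2/\<eta> - \<eta>/4)\<^sup>2 / 2)"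
      by simp
  qed
  also have "\<dots> \<le> L * (2 * exp (- 1 / (2 * \<eta>\<^sup>2)))"
    by (rule mult_left_mono[OF num_main[OF \<eta>0 \<eta>1] Lnn])
  finally show ?thesis unfolding eq by (simp add: mult_ac)
qed

end

theorem mainTheorem8:
  fixes f :: "'a::euclidean_space \<Rightarrow> real" and c :: 'a and y :: 'a and r \<eta> L :: real
  assumes "f differentiable_on UNIV"
    and "L-lipschitz_on UNIV f"
    and "r > 0" and "0 < \<eta>" and "\<eta> < 1"
    and "norm (y - c) \<le> \<eta> / 4 * r"
  shows "norm ((\<integral>x. ell f c r \<eta> x y \<partial>gauss_measure c r) - gradient (gauss_smooth r f) y)
           \<le> 2 * L * exp (- 1 / (2 * \<eta>\<^sup>2))
         \<and> (\<forall>x. norm (ell f c r \<eta> x y) \<le> 3 * L)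
         \<and> (\<forall>x D. ((\<lambda>z. ell f c r \<eta> x z) has_derivative D) (at y)
              \<longrightarrow> onorm D \<le> 20 * L * sqrt (real DIM('a)) / (r * \<eta>))"
proof -
  have 1: "norm ((\<integral>x. ell f c r \<eta> x y \<partial>gauss_measure c r) - gradient (gauss_smooth r f) y)
           \<le> 2 * L * exp (- 1 / (2 * \<eta>\<^sup>2))"
    by (rule part1[OF assms])
  have 2: "\<forall>x. norm (ell f c r \<eta> x y) \<le> 3 * L"
    using part2[OF assms] by blast
  have 3: "\<forall>x D. ((\<lambda>z. ell f c r \<eta> x z) has_derivative D) (at y)
              \<longrightarrow> onorm D \<le> 20 * L * sqrt (real DIM('a)) / (r * \<eta>)"
    using part3[OF assms] by blast
  show ?thesis using 1 2 3 by blast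
qed

end
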